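(* Let $R$ be a reduced elliptic root system of rank $l$ in $\mathcal V$ and let $\Pi\cup\{a\}$ be a fundamental-set of $R$; let $\pi_a:\mathcal V\to\mathcal V/\mathbb Ra$ be the canonical map. (1) For every $\alpha\in R$, $(\alpha+(\mathbb Z\setminus\{0\})a)\cap R\neq\emptyset$. (2) Let $S$ be a non-empty proper connected subset of $\Pi$, put $\mathcal V^S=\mathbb RS\oplus\mathbb Ra$ and $R^S=R\cap\mathcal V^S$. Then $(R^S,\mathcal V^S)$ is a reduced affine root system, $\pi_a(R^S)$ is an irreducible finite root system with base $\pi_a(S)$, and $\mathbb ZR^S=\mathbb ZS\oplus\mathbb Zk_Sa$ for some $k_S\in\mathbb N$.
   Context: Let $\mathcal V$ be a real vector space of dimension $l+2$ with a positive semi-definite symmetric bilinear form $(\,,\,)$ whose radical $\mathcal V^0=\{v:(v,v)=0\}$ has dimension $2$. For $(v,v)\ne0$ set $v^\vee=2v/(v,v)$, $s_v(z)=z-(v^\vee,z)v$. A set $S\subset\mathcal V\setminus\mathcal V^0$ is connected if there is no non-empty proper $S'\subset S$ with $(S',S\setminus S')=\{0\}$. An extended affine root system in a real space $\mathcal V$ with positive semidefinite form, rank $l$ and nullity $n=\dim\mathcal V^0$ ($\dim\mathcal V=l+n$), is a subset $R$ with: $R\subset\mathcal V\setminus\mathcal V^0$, $\mathbb RR=\mathcal V$; $\mathbb ZR$ free of rank $l+n$; $(\alpha^\vee,\beta)\in\mathbb Z$ for $\alpha,\beta\in R$; $s_\alpha(R)=R$ for $\alpha\in R$; $R$ connected.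 Nullity $0$: irreducible finite root system; nullity $1$: affine root system; nullity $2$: elliptic root system. $R$ is reduced if $R\cap 2R=\emptyset$. For nullity $0$ or $1$, a base of $R$ is a set $\Pi\subset R$ of $l+n$ linearly independent elements with $R=(R\cap\mathbb Z_{\ge0}\Pi)\cup(R\cap\mathbb Z_{\le0}\Pi)$. A fundamental-set of an elliptic root system $R$ is a subset $\Pi\cup\{a\}\subset\mathbb ZR$ with: $a\in\mathbb ZR\cap\mathcal V^0$ and there is $b$ with $\mathbb ZR\cap\mathcal V^0=\mathbb Za\oplus\mathbb Zb$; $\Pi\subset R$, $|\Pi|=l+1$, and $\pi_a(\Pi)$ is a base of the affine root system $\pi_a(R)\subset\mathcal V/\mathbb Ra$. *)

theory Defs
  imports "HOL-Analysis.Analysis"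
begin

definition psd_form_on :: "'v::real_vector set \<Rightarrow> ('v \<Rightarrow> 'v \<Rightarrow> real) \<Rightarrow> bool" where
  "psd_form_on W B \<longleftrightarrow> subspace W \<and>
     (\<forall>x\<in>W. \<forall>y\<in>W. B x y = B y x) \<and>
     (\<forall>x\<in>W. \<forall>y\<in>W. \<forall>z\<in>W. B (x + y) z = B x z + B y z) \<and>
     (\<forall>c. \<forall>x\<in>W. \<forall>y\<in>W. B (c *\<^sub>R x) y = c * B x y) \<and>
     (\<forall>x\<in>W. 0 \<le> B x x)"

definition rad :: "('v::real_vector \<Rightarrow> 'v \<Rightarrow> real) \<Rightarrow> 'v set \<Rightarrow> 'v set" where
  "rad B W = {v \<in> W. B v v = 0}"

definition copair :: "('v::real_vector \<Rightarrow> 'v \<Rightarrow> real) \<Rightarrow> 'v \<Rightarrow> 'v \<Rightarrow> real" where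
  "copair B \<alpha> \<beta> = 2 * B \<alpha> \<beta> / B \<alpha> \<alpha>"

definition refl :: "('v::real_vector \<Rightarrow> 'v \<Rightarrow> real) \<Rightarrow> 'v \<Rightarrow> 'v \<Rightarrow> 'v" where
  "refl B \<alpha> z = z - copair B \<alpha> z *\<^sub>R \<alpha>"

definition connected_set :: "('v::real_vector \<Rightarrow> 'v \<Rightarrow> real) \<Rightarrow> 'v set \<Rightarrow> bool" where
  "connected_set B S \<longleftrightarrow>
     \<not> (\<exists>S'. S' \<noteq> {} \<and> S' \<subset> S \<and> (\<forall>x\<in>S'. \<forall>y\<in>S - S'. B x y = 0))"

definition int_span :: "'v::real_vector set \<Rightarrow> 'v set" where
  "int_span X = {\<Sum>x\<in>F. of_int (c x) *\<^sub>R x | F c. finite F \<and> F \<subseteq> X}"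

definition int_independent :: "'v::real_vector set \<Rightarrow> bool" where
  "int_independent X \<longleftrightarrow> (\<forall>F c. finite F \<and> F \<subseteq> X \<and> (\<Sum>x\<in>F. of_int (c x) *\<^sub>R x) = 0
       \<longrightarrow> (\<forall>x\<in>F. c x = (0::int)))"

definition free_of_rank :: "'v::real_vector set \<Rightarrow> nat \<Rightarrow> bool" where
  "free_of_rank L k \<longleftrightarrow> (\<exists>Bs. finite Bs \<and> card Bs = k \<and> Bs \<subseteq> L \<and>
       int_span Bs = L \<and> int_independent Bs)"

text \<open>Extended affine root system \<open>R\<close> in the space \<open>W\<close> (with form \<open>B\<close>) of nullity \<open>n\<close>;
  its rank is \<open>dim W - n\<close>.  Nullity 0: irreducible finite root system; 1: affine;
  2: elliptic.\<close>
definition ears :: "('v::real_vector \<Rightarrow> 'v \<Rightarrow> real) \<Rightarrow> 'v set \<Rightarrow> 'v set \<Rightarrow> nat \<Rightarrow> bool" where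
  "ears B W R n \<longleftrightarrow> psd_form_on W B \<and> dim (rad B W) = n \<and>
     R \<subseteq> W - rad B W \<and> span R = W \<and>
     free_of_rank (int_span R) (dim W) \<and>
     (\<forall>\<alpha>\<in>R. \<forall>\<beta>\<in>R. copair B \<alpha> \<beta> \<in> \<int>) \<and>
     (\<forall>\<alpha>\<in>R. refl B \<alpha> ` R = R) \<and>
     connected_set B R"

definition reduced :: "'v::real_vector set \<Rightarrow> bool" where
  "reduced R \<longleftrightarrow> (\<forall>\<alpha>\<in>R. 2 *\<^sub>R \<alpha> \<notin> R)"

definition nonneg_int_comb :: "'v::real_vector set \<Rightarrow> 'v set" where
  "nonneg_int_comb P = {\<Sum>x\<in>P. of_int (c x) *\<^sub>R x | c. \<forall>x\<in>P. 0 \<le> c x}"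

definition nonpos_int_comb :: "'v::real_vector set \<Rightarrow> 'v set" where
  "nonpos_int_comb P = {\<Sum>x\<in>P. of_int (c x) *\<^sub>R x | c. \<forall>x\<in>P. c x \<le> 0}"

definition is_base :: "'v::real_vector set \<Rightarrow> 'v set \<Rightarrow> 'v set \<Rightarrow> bool" where
  "is_base W R P \<longleftrightarrow> P \<subseteq> R \<and> finite P \<and> card P = dim W \<and> independent P \<and>
     R = (R \<inter> nonneg_int_comb P) \<union> (R \<inter> nonpos_int_comb P)"

text \<open>A realization of the canonical map \<open>\<pi>\<^sub>a : V \<rightarrow> V/\<real>a\<close>: a linear map whose kernel
  is exactly \<open>\<real>a\<close>; the quotient \<open>V/\<real>a\<close> is identified with its image.\<close>
definition quotient_map :: "'v::real_vector \<Rightarrow> ('v \<Rightarrow> 'w::real_vector) \<Rightarrow> bool" where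
  "quotient_map a p \<longleftrightarrow> linear p \<and> (\<forall>x. p x = 0 \<longleftrightarrow> x \<in> span {a})"

definition qform :: "('v \<Rightarrow> 'v \<Rightarrow> real) \<Rightarrow> ('v \<Rightarrow> 'w) \<Rightarrow> 'w \<Rightarrow> 'w \<Rightarrow> real" where
  "qform B p u w = B (SOME x. p x = u) (SOME y. p y = w)"

definition fundamental_set ::
  "('v::real_vector \<Rightarrow> 'v \<Rightarrow> real) \<Rightarrow> 'v set \<Rightarrow> 'v set \<Rightarrow> 'v \<Rightarrow> ('v \<Rightarrow> 'w::real_vector) \<Rightarrow> bool" where
  "fundamental_set B R P a p \<longleftrightarrow>
     a \<in> int_span R \<inter> rad B UNIV \<and>
     (\<exists>b. int_span R \<inter> rad B UNIV = {of_int i *\<^sub>R a + of_int j *\<^sub>R b | i j. True} \<and>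
          (\<forall>i j. of_int i *\<^sub>R a + of_int j *\<^sub>R b = 0 \<longrightarrow> i = (0::int) \<and> j = (0::int))) \<and>
     P \<subseteq> R \<and> finite P \<and> card P = (dim (UNIV::'v set) - 2) + 1 \<and>
     ears (qform B p) (range p) (p ` R) 1 \<and>
     is_base (range p) (p ` R) (p ` P)"

end

theory Submission
  imports Defs
begin


section \<open>Generic facts on int_span\<close>

lemma int_span_intro:
  "finite F \<Longrightarrow> F \<subseteq> X \<Longrightarrow> (\<Sum>x\<in>F. of_int (c x) *\<^sub>R x) \<in> int_span X"
  unfolding int_span_def by blast

lemma int_span_0: "0 \<in> int_span X"
  unfolding int_span_def by (auto intro!: exI[of _ "{}"])

lemma int_span_sub_span: "int_span X \<subseteq> span X"
proof
  fix v assume "v \<in> int_span X"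
  then obtain F c where v: "v = (\<Sum>x\<in>F. of_int (c x) *\<^sub>R x)" "finite F" "F \<subseteq> X"
    unfolding int_span_def by blast
  show "v \<in> span X" unfolding v(1)
    by (rule span_sum) (use v in \<open>auto intro: span_mul span_base\<close>)
qed

lemma int_span_base: "x \<in> X \<Longrightarrow> x \<in> int_span X"
proof -
  assume "x \<in> X"
  have "x = (\<Sum>y\<in>{x}. of_int ((\<lambda>_. 1) y) *\<^sub>R y)" by simp
  then show ?thesis using int_span_intro[of "{x}" X "\<lambda>_. 1"] \<open>x \<in> X\<close> by simp
qed

lemma int_span_add:
  assumes "u \<in> int_span X" "v \<in> int_span X" shows "u + v \<in> int_span X"
proof -
  obtain F c where u: "u = (\<Sum>x\<in>F. of_int (c x) *\<^sub>R x)" "finite F" "F \<subseteq> X"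
    using assms(1) unfolding int_span_def by blast
  obtain G d where v: "v = (\<Sum>x\<in>G. of_int (d x) *\<^sub>R x)" "finite G" "G \<subseteq> X"
    using assms(2) unfolding int_span_def by blast
  define e where "e x = (if x \<in> F then c x else 0) + (if x \<in> G then d x else 0)" for x
  have fu: "u = (\<Sum>x\<in>F\<union>G. of_int (if x \<in> F then c x else 0) *\<^sub>R x)"
    unfolding u(1) using u(2) v(2)
    by (intro sum.mono_neutral_cong_left) auto
  have fv: "v = (\<Sum>x\<in>F\<union>G. of_int (if x \<in> G then d x else 0) *\<^sub>R x)"
    unfolding v(1) using u(2) v(2)
    by (intro sum.mono_neutral_cong_left) auto
  have "u + v = (\<Sum>x\<in>F\<union>G. of_int (e x) *\<^sub>R x)"
    unfolding fu fv sum.distrib[symmetric] e_def by (simp add: scaleR_add_left)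
  then show ?thesis using int_span_intro[of "F \<union> G" X e] u v by simp
qed

lemma int_span_scale:
  assumes "u \<in> int_span X" shows "of_int k *\<^sub>R u \<in> int_span X"
proof -
  obtain F c where u: "u = (\<Sum>x\<in>F. of_int (c x) *\<^sub>R x)" "finite F" "F \<subseteq> X"
    using assms(1) unfolding int_span_def by blast
  have "of_int k *\<^sub>R u = (\<Sum>x\<in>F. of_int (k * c x) *\<^sub>R x)"
    unfolding u(1) by (simp add: scaleR_sum_right)
  then show ?thesis using int_span_intro[of F X "\<lambda>x. k * c x"] u by simp
qed

lemma int_span_neg: "u \<in> int_span X \<Longrightarrow> - u \<in> int_span X"
  using int_span_scale[of u X "-1"] by simp

lemma int_span_diff: "u \<in> int_span X \<Longrightarrow> v \<in> int_span X \<Longrightarrow> u - v \<in> int_span X"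
  using int_span_add[of u X "-v"] int_span_neg[of v X] by simp

lemma int_span_sum:
  assumes "finite F" "\<And>x. x \<in> F \<Longrightarrow> f x \<in> int_span X"
  shows "(\<Sum>x\<in>F. f x) \<in> int_span X"
  using assms by (induction F rule: finite_induct) (auto intro: int_span_0 int_span_add)

lemma int_span_mono: "X \<subseteq> Y \<Longrightarrow> int_span X \<subseteq> int_span Y"
  unfolding int_span_def by blast

lemma int_span_subset:
  assumes "X \<subseteq> int_span Y" shows "int_span X \<subseteq> int_span Y"
proof
  fix v assume "v \<in> int_span X"
  then obtain F c where v: "v = (\<Sum>x\<in>F. of_int (c x) *\<^sub>R x)" "finite F" "F \<subseteq> X"
    unfolding int_span_def by blast
  show "v \<in> int_span Y" unfolding v(1)
    by (rule int_span_sum) (use v assms in \<open>auto intro: int_span_scale\<close>)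
qed

lemma int_span_of_int_mult: "k \<in> \<int> \<Longrightarrow> u \<in> int_span X \<Longrightarrow> k *\<^sub>R u \<in> int_span X"
  by (metis Ints_cases int_span_scale)

section \<open>psd forms\<close>

locale psd =
  fixes B :: "'v::euclidean_space \<Rightarrow> 'v \<Rightarrow> real"
  assumes psdB: "psd_form_on UNIV B"
begin

lemma sym: "B x y = B y x" using psdB unfolding psd_form_on_def by auto
lemma add1: "B (x + y) z = B x z + B y z" using psdB unfolding psd_form_on_def by auto
lemma add2: "B z (x + y) = B z x + B z y" using add1 sym by metis
lemma scale1: "B (c *\<^sub>R x) y = c * B x y" using psdB unfolding psd_form_on_def by auto
lemma scale2: "B y (c *\<^sub>R x) = c * B y x" using scale1 sym by metis
lemma nonneg: "0 \<le> B x x" using psdB unfolding psd_form_on_def by auto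
lemma zero1[simp]: "B 0 y = 0" using scale1[of 0 0 y] by simp
lemma zero2[simp]: "B y 0 = 0" using zero1 sym by metis
lemma neg1: "B (- x) y = - B x y" using scale1[of "-1" x y] by simp
lemma neg2: "B y (- x) = - B y x" using scale2[of y "-1" x] by simp
lemma diff1: "B (x - y) z = B x z - B y z" using add1[of x "-y" z] neg1 by simp
lemma diff2: "B z (x - y) = B z x - B z y" using add2[of z x "-y"] neg2 by simp
lemmas Bsimps = add1 add2 scale1 scale2 neg1 neg2 diff1 diff2

lemma sum1: "B (\<Sum>x\<in>F. f x) y = (\<Sum>x\<in>F. B (f x) y)"
  by (induction F rule: infinite_finite_induct) (auto simp: add1)
lemma sum2: "B y (\<Sum>x\<in>F. f x) = (\<Sum>x\<in>F. B y (f x))"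
  by (induction F rule: infinite_finite_induct) (auto simp: add2)

lemma CS: "(B x y)^2 \<le> B x x * B y y"
proof (cases "B y y = 0")
  case True
  have "B x y = 0"
  proof (rule ccontr)
    assume h: "B x y \<noteq> 0"
    define t where "t = - (B x x + 1) / (2 * B x y)"
    have "0 \<le> B (x + t *\<^sub>R y) (x + t *\<^sub>R y)" by (rule nonneg)
    also have "\<dots> = B x x + 2 * t * B x y + t * t * B y y"
      by (simp add: Bsimps sym[of y x] algebra_simps)
    also have "\<dots> = -1" using True h unfolding t_def by (simp add: field_simps)
    finally show False by simp
  qed
  then show ?thesis using True by simp
next
  case False
  then have pos: "B y y > 0" using nonneg[of y] by simp
  define t where "t = - B x y / B y y"
  have "0 \<le> B (x + t *\<^sub>R y) (x + t *\<^sub>R y)" by (rule nonneg)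
  also have "\<dots> = B x x + 2 * t * B x y + t * t * B y y"
    by (simp add: Bsimps sym[of y x] algebra_simps)
  also have "\<dots> = B x x - (B x y)^2 / B y y" using pos unfolding t_def
    by (simp add: field_simps power2_eq_square)
  finally show ?thesis using pos by (simp add: field_simps)
qed

lemma null_orth: "B n n = 0 \<Longrightarrow> B n z = 0"
  using CS[of n z] by (simp add: power2_eq_square) (metis antisym zero_le_square mult_eq_0_iff)
lemma null_orth2: "B n n = 0 \<Longrightarrow> B z n = 0"
  using null_orth sym by metis

lemma rad_eq: "rad B UNIV = {n. \<forall>z. B n z = 0}"
  unfolding rad_def using null_orth by auto

lemma subspace_rad: "subspace (rad B UNIV)"
  unfolding rad_eq subspace_def by (auto simp: Bsimps)

lemma subspace_rad_int: "subspace W \<Longrightarrow> subspace (rad B W)"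
proof -
  assume "subspace W"
  moreover have "rad B W = W \<inter> rad B UNIV" unfolding rad_def by auto
  ultimately show ?thesis using subspace_rad subspace_inter by metis
qed

lemma rad_null: "n \<in> rad B UNIV \<Longrightarrow> B n z = 0" "n \<in> rad B UNIV \<Longrightarrow> B z n = 0"
  unfolding rad_eq using sym by auto

definition sr :: "'v \<Rightarrow> 'v \<Rightarrow> 'v" where "sr \<alpha> z = z - (2 * B \<alpha> z / B \<alpha> \<alpha>) *\<^sub>R \<alpha>"

lemma refl_eq: "refl B \<alpha> z = sr \<alpha> z" unfolding refl_def copair_def sr_def by simp

lemma linear_sr: "linear (sr \<alpha>)"
  unfolding sr_def by (rule linearI) (auto simp: Bsimps algebra_simps add_divide_distrib scaleR_add_left)

lemma sr_pair: "B \<alpha> \<alpha> \<noteq> 0 \<Longrightarrow> B (sr \<alpha> x) (sr \<alpha> y) = B x y"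
  unfolding sr_def by (simp add: Bsimps sym[of x \<alpha>] sym[of y \<alpha>] field_simps power2_eq_square)

lemma sr_invol: "B \<alpha> \<alpha> \<noteq> 0 \<Longrightarrow> sr \<alpha> (sr \<alpha> x) = x"
  unfolding sr_def by (simp add: Bsimps field_simps)

lemma sr_null: "n \<in> rad B UNIV \<Longrightarrow> sr \<alpha> n = n"
  unfolding sr_def using rad_null by simp

end



locale ell =
  fixes B :: "'v::euclidean_space \<Rightarrow> 'v \<Rightarrow> real"
    and R P :: "'v set" and a :: 'v
    and p :: "'v \<Rightarrow> 'w::euclidean_space"
  assumes E: "ears B UNIV R 2"
    and red: "reduced R"
    and Qm: "quotient_map a p"
    and FS: "fundamental_set B R P a p"

sublocale ell \<subseteq> psd B
  using E unfolding ears_def by unfold_locales auto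

context ell
begin

lemma dimrad: "dim (rad B UNIV) = 2" using E unfolding ears_def by auto
lemma R_nonrad: "\<gamma> \<in> R \<Longrightarrow> \<gamma> \<notin> rad B UNIV" using E unfolding ears_def by auto
lemma spanR: "span R = UNIV" using E unfolding ears_def by auto
lemma freeR: "free_of_rank (int_span R) DIM('v)" using E unfolding ears_def by (auto simp: dim_UNIV)
lemma copint: "\<alpha> \<in> R \<Longrightarrow> \<beta> \<in> R \<Longrightarrow> 2 * B \<alpha> \<beta> / B \<alpha> \<alpha> \<in> \<int>"
  using E unfolding ears_def copair_def by auto
lemma reflR: "\<alpha> \<in> R \<Longrightarrow> sr \<alpha> ` R = R"
  using E unfolding ears_def by (auto simp: refl_eq[abs_def])
lemma connR: "connected_set B R" using E unfolding ears_def by auto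

lemma Bpos: "\<gamma> \<in> R \<Longrightarrow> B \<gamma> \<gamma> > 0"
  using R_nonrad[of \<gamma>] nonneg[of \<gamma>] unfolding rad_def by auto
lemma Bne: "\<gamma> \<in> R \<Longrightarrow> B \<gamma> \<gamma> \<noteq> 0" using Bpos by force

lemma srR: "\<alpha> \<in> R \<Longrightarrow> \<beta> \<in> R \<Longrightarrow> sr \<alpha> \<beta> \<in> R" using reflR by blast

lemma a_rad: "a \<in> rad B UNIV" and a_int: "a \<in> int_span R"
  using FS unfolding fundamental_set_def by auto

definition bb where "bb = (SOME b. int_span R \<inter> rad B UNIV = {of_int i *\<^sub>R a + of_int j *\<^sub>R b | i j. True} \<and>
          (\<forall>i j. of_int i *\<^sub>R a + of_int j *\<^sub>R b = 0 \<longrightarrow> i = (0::int) \<and> j = (0::int)))"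

lemma bb: "int_span R \<inter> rad B UNIV = {of_int i *\<^sub>R a + of_int j *\<^sub>R bb | i j. True}"
  "\<And>i j. of_int i *\<^sub>R a + of_int j *\<^sub>R bb = 0 \<Longrightarrow> i = (0::int) \<and> j = (0::int)"
proof -
  have "\<exists>b. int_span R \<inter> rad B UNIV = {of_int i *\<^sub>R a + of_int j *\<^sub>R b | i j. True} \<and>
          (\<forall>i j. of_int i *\<^sub>R a + of_int j *\<^sub>R b = 0 \<longrightarrow> i = (0::int) \<and> j = (0::int))"
    using FS unfolding fundamental_set_def by blast
  from someI_ex[OF this] show "int_span R \<inter> rad B UNIV = {of_int i *\<^sub>R a + of_int j *\<^sub>R bb | i j. True}"
    "\<And>i j. of_int i *\<^sub>R a + of_int j *\<^sub>R bb = 0 \<Longrightarrow> i = (0::int) \<and> j = (0::int)"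
    unfolding bb_def by blast+
qed

lemma bb_mem: "bb \<in> int_span R" "bb \<in> rad B UNIV"
proof -
  have "of_int 0 *\<^sub>R a + of_int 1 *\<^sub>R bb \<in> int_span R \<inter> rad B UNIV" unfolding bb(1) by blast
  then show "bb \<in> int_span R" "bb \<in> rad B UNIV" by auto
qed

lemma null_lattice: "x \<in> int_span R \<Longrightarrow> x \<in> rad B UNIV \<Longrightarrow> \<exists>i j. x = of_int i *\<^sub>R a + of_int j *\<^sub>R bb"
  using bb(1) by blast

lemma a_ne0: "a \<noteq> 0" using bb(2)[of 1 0] by auto

lemma P_sub: "P \<subseteq> R" and P_fin: "finite P" and cardP: "card P = DIM('v) - 1"
  and base: "is_base (range p) (p ` R) (p ` P)"
  and qears: "ears (qform B p) (range p) (p ` R) 1"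
proof -
  have "DIM('v) \<ge> 2" using dimrad dim_subset_UNIV[of "rad B UNIV"] by (simp add: dim_UNIV)
  then show "P \<subseteq> R" "finite P" "card P = DIM('v) - 1" "is_base (range p) (p ` R) (p ` P)"
    "ears (qform B p) (range p) (p ` R) 1"
    using FS unfolding fundamental_set_def by (auto simp: dim_UNIV)
qed

lemma lin_p: "linear p" and ker_p: "p x = 0 \<longleftrightarrow> x \<in> span {a}"
  using Qm unfolding quotient_map_def by auto

lemma R_int: "R \<subseteq> int_span R" using int_span_base by blast


section \<open>Lattice\<close>

lemma ab_indep:
  assumes "r *\<^sub>R a + s *\<^sub>R bb = 0" shows "r = 0 \<and> s = 0"
proof -
  obtain Bs where Bs: "finite Bs" "card Bs = DIM('v)" "Bs \<subseteq> int_span R"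
    "int_span Bs = int_span R" "int_independent Bs"
    using freeR unfolding free_of_rank_def by blast
  have "span R \<subseteq> span Bs"
  proof -
    have "R \<subseteq> int_span Bs" using Bs(4) R_int by auto
    also have "\<dots> \<subseteq> span Bs" by (rule int_span_sub_span)
    finally show ?thesis by (simp add: span_minimal)
  qed
  then have spB: "span Bs = UNIV" using spanR by auto
  have indB: "independent Bs"
    using card_eq_dim[of Bs UNIV] Bs(1,2) spB by (auto simp: dim_UNIV)
  have coord: "\<exists>c. v = (\<Sum>e\<in>Bs. of_int (c e) *\<^sub>R e)" if "v \<in> int_span R" for v
  proof -
    from that Bs(4) obtain F c where v: "v = (\<Sum>x\<in>F. of_int (c x) *\<^sub>R x)" "finite F" "F \<subseteq> Bs"
      unfolding int_span_def by blast
    have "v = (\<Sum>e\<in>Bs. of_int (if e \<in> F then c e else 0) *\<^sub>R e)"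
      unfolding v(1) using v(2,3) Bs(1) by (intro sum.mono_neutral_cong_left) auto
    then show ?thesis by (rule exI[of _ "\<lambda>e. if e \<in> F then c e else 0"])
  qed
  obtain \<alpha> where al: "a = (\<Sum>e\<in>Bs. of_int (\<alpha> e) *\<^sub>R e)" using coord a_int by blast
  obtain \<beta> where be: "bb = (\<Sum>e\<in>Bs. of_int (\<beta> e) *\<^sub>R e)" using coord bb_mem by blast
  have gen: "\<And>x y. x = (\<Sum>e\<in>Bs. of_int (\<alpha> e) *\<^sub>R e) \<Longrightarrow> y = (\<Sum>e\<in>Bs. of_int (\<beta> e) *\<^sub>R e) \<Longrightarrow>
     r *\<^sub>R x + s *\<^sub>R y = (\<Sum>e\<in>Bs. (r * of_int (\<alpha> e) + s * of_int (\<beta> e)) *\<^sub>R e)"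
    by (simp add: scaleR_sum_right sum.distrib[symmetric] scaleR_add_left)
  have gen2: "\<And>x y. x = (\<Sum>e\<in>Bs. of_int (\<alpha> e) *\<^sub>R e) \<Longrightarrow> y = (\<Sum>e\<in>Bs. of_int (\<beta> e) *\<^sub>R e) \<Longrightarrow>
     of_int (\<beta> e0) *\<^sub>R x + of_int (- \<alpha> e0) *\<^sub>R y = 
         (\<Sum>e\<in>Bs. (of_int (\<beta> e0) * of_int (\<alpha> e) - of_int (\<alpha> e0) * of_int (\<beta> e)) *\<^sub>R e)" for e0
    by (simp add: scaleR_sum_right sum_subtractf[symmetric] scaleR_diff_left sum_negf)
  have "(\<Sum>e\<in>Bs. (r * of_int (\<alpha> e) + s * of_int (\<beta> e)) *\<^sub>R e) = 0"
    using assms gen[OF al be] by simp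
  then have rel: "\<And>e. e \<in> Bs \<Longrightarrow> r * of_int (\<alpha> e) + s * of_int (\<beta> e) = 0"
    using indB Bs(1) unfolding independent_explicit
    by (elim conjE allE[of _ "\<lambda>e. r * of_int (\<alpha> e) + s * of_int (\<beta> e)"]) blast
  have a0: False if "\<forall>e\<in>Bs. \<alpha> e = 0"
    using that a_ne0 unfolding al by simp
  show ?thesis
  proof (rule ccontr)
    assume nz: "\<not> (r = 0 \<and> s = 0)"
    show False
    proof (cases "s = 0")
      case True
      then have "r \<noteq> 0" using nz by simp
      then have "\<forall>e\<in>Bs. \<alpha> e = 0" using rel True by simp
      then show False using a0 by simp
    next
      case False
      obtain e0 where e0: "e0 \<in> Bs" "\<alpha> e0 \<noteq> 0" using a0 by blast
      have be2: "of_int (\<beta> e) = - (r / s) * of_int (\<alpha> e)" if "e \<in> Bs" for e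
        using rel[OF that] False by (simp add: field_simps)
      have "of_int (\<beta> e0) *\<^sub>R a + of_int (- \<alpha> e0) *\<^sub>R bb = 
         (\<Sum>e\<in>Bs. (of_int (\<beta> e0) * of_int (\<alpha> e) - of_int (\<alpha> e0) * of_int (\<beta> e)) *\<^sub>R e)"
        by (rule gen2[OF al be])
      also have "\<dots> = 0"
        by (rule sum.neutral) (use be2 e0 in \<open>auto simp: algebra_simps\<close>)
      finally show False using bb(2)[of "\<beta> e0" "- \<alpha> e0"] e0 by simp
    qed
  qed
qed

lemma ZR_line: "t *\<^sub>R a \<in> int_span R \<Longrightarrow> t \<in> \<int>"
proof -
  assume h: "t *\<^sub>R a \<in> int_span R"
  have "t *\<^sub>R a \<in> rad B UNIV" using a_rad subspace_rad by (simp add: subspace_mul)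
  then obtain i j where e: "t *\<^sub>R a = of_int i *\<^sub>R a + of_int j *\<^sub>R bb" using null_lattice h by blast
  then have "(t - of_int i) *\<^sub>R a + (- of_int j) *\<^sub>R bb = 0" by (simp add: algebra_simps)
  then have "t = of_int i" using ab_indep by fastforce
  then show ?thesis by simp
qed

lemma rad_span_ab: "rad B UNIV = span {a, bb}"
proof -
  have sub: "span {a, bb} \<subseteq> rad B UNIV"
    using a_rad bb_mem(2) subspace_rad by (simp add: span_minimal)
  have "a \<noteq> bb" using bb(2)[of 1 "-1"] by auto
  have "bb \<notin> span {a}"
  proof
    assume "bb \<in> span {a}"
    then obtain t where "bb = t *\<^sub>R a" by (auto simp: span_singleton)
    then have "t *\<^sub>R a + (-1) *\<^sub>R bb = 0" by simp
    then show False using ab_indep by fastforce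
  qed
  then have "independent (insert bb {a})"
    using a_ne0 by (intro independent_insertI) (auto simp: independent_empty)
  then have "independent {a, bb}" by (simp add: insert_commute)
  then have "dim (span {a, bb}) = 2" using \<open>a \<noteq> bb\<close> by (simp add: dim_span_eq_card_independent dim_eq_card_independent)
  then show ?thesis using sub dimrad subspace_rad
    by (metis order_refl subspace_dim_equal subspace_span)
qed

end


context ell
begin

definition M where "M \<gamma> = {x. x \<in> rad B UNIV \<and> \<gamma> + x \<in> R}"

lemma B_rad_shift: "x \<in> rad B UNIV \<Longrightarrow> B (\<gamma> + x) z = B \<gamma> z"
  using rad_null by (simp add: add1)
lemma B_rad_shift2: "x \<in> rad B UNIV \<Longrightarrow> B z (\<gamma> + x) = B z \<gamma>"
  using rad_null by (simp add: add2)

lemma T: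
  assumes g: "\<gamma> \<in> R" and x: "x \<in> rad B UNIV" "\<gamma> + x \<in> R" and d: "\<delta> \<in> R"
  shows "\<delta> + (2 * B \<gamma> \<delta> / B \<gamma> \<gamma>) *\<^sub>R x \<in> R" "\<delta> - (2 * B \<gamma> \<delta> / B \<gamma> \<gamma>) *\<^sub>R x \<in> R"
proof -
  have ne: "B \<gamma> \<gamma> \<noteq> 0" using Bne g .
  define c where "c = 2 * B \<gamma> \<delta> / B \<gamma> \<gamma>"
  have gg: "B (\<gamma> + x) (\<gamma> + x) = B \<gamma> \<gamma>" using B_rad_shift B_rad_shift2 x by simp
  have s1: "sr \<gamma> \<delta> = \<delta> - c *\<^sub>R \<gamma>" unfolding sr_def c_def ..
  have p1: "B \<gamma> (\<delta> - c *\<^sub>R \<gamma>) = - B \<gamma> \<delta>" unfolding c_def using ne by (simp add: Bsimps field_simps)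
  have "sr (\<gamma> + x) (sr \<gamma> \<delta>) = \<delta> - c *\<^sub>R \<gamma> - (2 * B \<gamma> (\<delta> - c *\<^sub>R \<gamma>) / B \<gamma> \<gamma>) *\<^sub>R (\<gamma> + x)"
    using gg B_rad_shift[OF x(1)] unfolding s1 by (simp add: sr_def c_def)
  also have "\<dots> = \<delta> + c *\<^sub>R x" unfolding p1 by (simp add: algebra_simps c_def mult.commute)
  finally have "sr (\<gamma> + x) (sr \<gamma> \<delta>) = \<delta> + c *\<^sub>R x" .
  moreover have "sr (\<gamma> + x) (sr \<gamma> \<delta>) \<in> R" using srR g x d by blast
  ultimately show "\<delta> + (2 * B \<gamma> \<delta> / B \<gamma> \<gamma>) *\<^sub>R x \<in> R" unfolding c_def by simp
  have s2: "sr (\<gamma> + x) \<delta> = \<delta> - c *\<^sub>R (\<gamma> + x)" using gg B_rad_shift[OF x(1)] by (simp add: sr_def c_def)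
  have p2: "B \<gamma> (\<delta> - c *\<^sub>R (\<gamma> + x)) = - B \<gamma> \<delta>" unfolding c_def using ne rad_null x(1)
    by (simp add: Bsimps field_simps)
  have "sr \<gamma> (sr (\<gamma> + x) \<delta>) = sr \<gamma> (\<delta> - c *\<^sub>R (\<gamma> + x))" by (simp only: s2)
  also have "\<dots> = (\<delta> - c *\<^sub>R (\<gamma> + x)) - (2 * B \<gamma> (\<delta> - c *\<^sub>R (\<gamma> + x)) / B \<gamma> \<gamma>) *\<^sub>R \<gamma>"
    by (simp only: sr_def)
  also have "\<dots> = \<delta> - c *\<^sub>R x" by (simp only: p2) (simp add: algebra_simps c_def mult.commute)
  finally have "sr \<gamma> (sr (\<gamma> + x) \<delta>) = \<delta> - c *\<^sub>R x" .
  moreover have "sr \<gamma> (sr (\<gamma> + x) \<delta>) \<in> R" using srR g x d by blast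
  ultimately show "\<delta> - (2 * B \<gamma> \<delta> / B \<gamma> \<gamma>) *\<^sub>R x \<in> R" unfolding c_def by simp
qed

lemma M0: "\<gamma> \<in> R \<Longrightarrow> 0 \<in> M \<gamma>"
  unfolding M_def using subspace_rad by (simp add: subspace_0)

lemma M_step:
  assumes g: "\<gamma> \<in> R" and x: "x \<in> M \<gamma>" and w: "w \<in> M \<gamma>"
  shows "w + 2 *\<^sub>R x \<in> M \<gamma>" "w - 2 *\<^sub>R x \<in> M \<gamma>"
proof -
  have xr: "x \<in> rad B UNIV" "\<gamma> + x \<in> R" and wr: "w \<in> rad B UNIV" "\<gamma> + w \<in> R"
    using x w unfolding M_def by auto
  have c: "2 * B \<gamma> (\<gamma> + w) / B \<gamma> \<gamma> = 2" using Bne[OF g] B_rad_shift2[OF wr(1)] by simp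
  have "\<gamma> + w + 2 *\<^sub>R x \<in> R" "\<gamma> + w - 2 *\<^sub>R x \<in> R" using T[OF g xr wr(2)] unfolding c by auto
  moreover have "w + 2 *\<^sub>R x \<in> rad B UNIV" "w - 2 *\<^sub>R x \<in> rad B UNIV"
    using xr wr subspace_rad by (auto intro: subspace_add subspace_diff subspace_mul)
  ultimately show "w + 2 *\<^sub>R x \<in> M \<gamma>" "w - 2 *\<^sub>R x \<in> M \<gamma>" unfolding M_def by (auto simp: add.assoc add_diff_eq)
qed

lemma M_int:
  assumes g: "\<gamma> \<in> R" and x: "x \<in> M \<gamma>" and w: "w \<in> M \<gamma>"
  shows "w + of_int (2 * k) *\<^sub>R x \<in> M \<gamma>"
proof (induction k rule: int_induct[where k=0])
  case base then show ?case using w by simp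
next
  case (step1 i)
  have "w + of_int (2 * i) *\<^sub>R x + 2 *\<^sub>R x \<in> M \<gamma>" using M_step(1)[OF g x step1(2)] .
  then show ?case by (simp add: algebra_simps)
next
  case (step2 i)
  have "w + of_int (2 * i) *\<^sub>R x - 2 *\<^sub>R x \<in> M \<gamma>" using M_step(2)[OF g x step2(2)] .
  then show ?case by (simp add: algebra_simps)
qed

lemma M_in_int: "\<gamma> \<in> R \<Longrightarrow> x \<in> M \<gamma> \<Longrightarrow> x \<in> int_span R \<inter> rad B UNIV"
proof -
  assume "\<gamma> \<in> R" "x \<in> M \<gamma>"
  then have "\<gamma> + x \<in> int_span R" "\<gamma> \<in> int_span R" "x \<in> rad B UNIV"
    unfolding M_def using R_int by auto
  then show ?thesis using int_span_diff[of "\<gamma> + x" R \<gamma>] by simp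
qed

definition Qv where "Qv v \<gamma> \<longleftrightarrow> (\<exists>m::int. m \<noteq> 0 \<and> \<gamma> + of_int m *\<^sub>R v \<in> R)"

lemma conn_all:
  assumes "S' \<subseteq> R" "S' \<noteq> {}" "\<And>\<gamma> \<delta>. \<gamma> \<in> S' \<Longrightarrow> \<delta> \<in> R \<Longrightarrow> B \<gamma> \<delta> \<noteq> 0 \<Longrightarrow> \<delta> \<in> S'"
  shows "S' = R"
proof (rule ccontr)
  assume "S' \<noteq> R"
  then have "S' \<subset> R" using assms(1) by auto
  moreover have "\<forall>x\<in>S'. \<forall>y\<in>R - S'. B x y = 0" using assms(3) by blast
  ultimately show False using connR assms(2) unfolding connected_set_def by blast
qed

lemma copair_int_nz:
  assumes "\<gamma> \<in> R" "\<delta> \<in> R" "B \<gamma> \<delta> \<noteq> 0"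
  obtains n :: int where "n \<noteq> 0" "2 * B \<gamma> \<delta> / B \<gamma> \<gamma> = of_int n"
proof -
  obtain n :: int where n: "2 * B \<gamma> \<delta> / B \<gamma> \<gamma> = of_int n" using copint[OF assms(1,2)] Ints_cases by metis
  moreover have "n \<noteq> 0" using n assms(3) Bne[OF assms(1)] by auto
  ultimately show ?thesis using that by blast
qed

lemma Qv_prop:
  assumes v: "v \<in> rad B UNIV" and q: "Qv v \<gamma>" and g: "\<gamma> \<in> R" and d: "\<delta> \<in> R" and ne: "B \<gamma> \<delta> \<noteq> 0"
  shows "Qv v \<delta>"
proof -
  obtain m :: int where m: "m \<noteq> 0" "\<gamma> + of_int m *\<^sub>R v \<in> R" using q unfolding Qv_def by blast
  obtain n :: int where n: "n \<noteq> 0" "2 * B \<gamma> \<delta> / B \<gamma> \<gamma> = of_int n" using copair_int_nz[OF g d ne] by blast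
  have "of_int m *\<^sub>R v \<in> rad B UNIV" using v subspace_rad by (simp add: subspace_mul)
  from T(1)[OF g this m(2) d] have "\<delta> + of_int (n * m) *\<^sub>R v \<in> R" unfolding n by simp
  then show ?thesis unfolding Qv_def using m n by (intro exI[of _ "n*m"]) simp
qed

lemma LD:
  assumes g: "\<gamma> \<in> R" and x: "x \<in> M \<gamma>" and y: "y \<in> M \<gamma>"
    and v: "v \<in> int_span R \<inter> rad B UNIV" and nq: "\<not> Qv v \<gamma>"
  shows "\<exists>r s. (r \<noteq> 0 \<or> s \<noteq> 0) \<and> r *\<^sub>R x + s *\<^sub>R y = 0"
proof -
  obtain x1 x2 where xe: "x = of_int x1 *\<^sub>R a + of_int x2 *\<^sub>R bb" using M_in_int[OF g x] null_lattice by blast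
  obtain y1 y2 where ye: "y = of_int y1 *\<^sub>R a + of_int y2 *\<^sub>R bb" using M_in_int[OF g y] null_lattice by blast
  obtain v1 v2 where ve: "v = of_int v1 *\<^sub>R a + of_int v2 *\<^sub>R bb" using v null_lattice by blast
  define D where "D = x1 * y2 - x2 * y1"
  show ?thesis
  proof (cases "D = 0")
    case False
    have "0 + of_int (2 * (v1 * y2 - v2 * y1)) *\<^sub>R x \<in> M \<gamma>" using M_int[OF g x M0[OF g]] .
    from M_int[OF g y this, of "v2 * x1 - v1 * x2"]
    have "of_int (2 * (v1 * y2 - v2 * y1)) *\<^sub>R x + of_int (2 * (v2 * x1 - v1 * x2)) *\<^sub>R y \<in> M \<gamma>" by simp
    also have "of_int (2 * (v1 * y2 - v2 * y1)) *\<^sub>R x + of_int (2 * (v2 * x1 - v1 * x2)) *\<^sub>R y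
       = of_int (2 * D) *\<^sub>R v"
      unfolding xe ye ve D_def by (simp add: algebra_simps)
    finally have "\<gamma> + of_int (2 * D) *\<^sub>R v \<in> R" unfolding M_def by simp
    then have "Qv v \<gamma>" unfolding Qv_def using False by (intro exI[of _ "2*D"]) simp
    then show ?thesis using nq by simp
  next
    case True
    show ?thesis
    proof (cases "y2 = 0 \<and> x2 = 0")
      case False
      have "of_int y2 *\<^sub>R x + of_int (- x2) *\<^sub>R y = of_int D *\<^sub>R a"
        unfolding xe ye D_def by (simp add: algebra_simps)
      then have "of_int y2 *\<^sub>R x + of_int (- x2) *\<^sub>R y = 0" using True by simp
      then show ?thesis using False by (intro exI[of _ "of_int y2"] exI[of _ "of_int (- x2)"]) auto
    next
      case c2: True
      show ?thesis
      proof (cases "y1 = 0 \<and> x1 = 0")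
        case False
        have "of_int y1 *\<^sub>R x + of_int (- x1) *\<^sub>R y = 0"
          unfolding xe ye using c2 by (simp add: algebra_simps)
        then show ?thesis using False by (intro exI[of _ "of_int y1"] exI[of _ "of_int (- x1)"]) auto
      next
        case True
        then have "x = 0" using xe c2 by simp
        then show ?thesis by (intro exI[of _ 1] exI[of _ 0]) auto
      qed
    qed
  qed
qed

end


context ell
begin

lemma span_Pa: "span (P \<union> {a}) = UNIV"
proof -
  have bs: "p ` P \<subseteq> p ` R" "finite (p ` P)" "card (p ` P) = dim (range p)" "independent (p ` P)"
    using base unfolding is_base_def by auto
  have "range p \<subseteq> span (p ` P)"
    using card_eq_dim[of "p ` P" "range p"] bs by auto
  also have "\<dots> = p ` span P" using span_linear_image[OF lin_p] .
  finally have rp: "range p \<subseteq> p ` span P" .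
  show ?thesis
  proof (rule set_eqI, rule iffI)
    fix v :: 'v
    obtain w where w: "w \<in> span P" "p v = p w" using rp by blast
    then have "p (v - w) = 0" using linear_diff[OF lin_p] by simp
    then have "v - w \<in> span {a}" using ker_p by simp
    then have "v - w \<in> span (P \<union> {a})" by (meson span_mono subsetD sup_ge2)
    moreover have "w \<in> span (P \<union> {a})" using w(1) by (meson span_mono subsetD sup_ge1)
    ultimately have "(v - w) + w \<in> span (P \<union> {a})" by (rule span_add)
    then show "v \<in> span (P \<union> {a})" by simp
  qed auto
qed

lemma orth_P_rad:
  assumes "\<And>\<beta>. \<beta> \<in> P \<Longrightarrow> B \<beta> d = 0" shows "d \<in> rad B UNIV"
proof -
  have sub: "subspace {z. B z d = 0}" unfolding subspace_def by (auto simp: Bsimps)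
  have "P \<union> {a} \<subseteq> {z. B z d = 0}" using assms rad_null(1)[OF a_rad] by auto
  then have "span (P \<union> {a}) \<subseteq> {z. B z d = 0}" using sub span_minimal by blast
  then have "B d d = 0" using span_Pa by auto
  then show ?thesis unfolding rad_def by simp
qed

lemma copair_bound:
  assumes b: "\<beta> \<in> R" and g: "\<gamma> \<in> R" shows "\<bar>2 * B \<beta> \<gamma> / B \<beta> \<beta>\<bar> \<le> 4"
proof (cases "B \<beta> \<gamma> = 0")
  case True then show ?thesis by simp
next
  case False
  obtain n1 :: int where n1: "2 * B \<beta> \<gamma> / B \<beta> \<beta> = of_int n1" using copint[OF b g] Ints_cases by metis
  obtain n2 :: int where n2: "n2 \<noteq> 0" "2 * B \<gamma> \<beta> / B \<gamma> \<gamma> = of_int n2"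
    using copair_int_nz[OF g b] False sym by metis
  have pb: "B \<beta> \<beta> > 0" and pg: "B \<gamma> \<gamma> > 0" using Bpos b g by auto
  have "of_int n1 * of_int n2 = (2 * B \<beta> \<gamma> / B \<beta> \<beta>) * (2 * B \<gamma> \<beta> / B \<gamma> \<gamma>)"
    using n1 n2 by simp
  also have "\<dots> = 4 * (B \<beta> \<gamma>)^2 / (B \<beta> \<beta> * B \<gamma> \<gamma>)"
    using sym[of \<gamma> \<beta>] by (simp add: field_simps power2_eq_square)
  finally have pe: "of_int n1 * of_int n2 = 4 * (B \<beta> \<gamma>)^2 / (B \<beta> \<beta> * B \<gamma> \<gamma>)" .
  have "of_int n1 * of_int n2 \<le> (4::real)" unfolding pe using CS[of \<beta> \<gamma>] pb pg by (simp add: field_simps)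
  then have le4: "real_of_int (n1 * n2) \<le> 4" by simp
  have ge0: "real_of_int (n1 * n2) \<ge> 0"
    using pe pb pg by simp
  have "1 \<le> \<bar>n2\<bar>" using n2(1) by linarith
  then have "\<bar>n1\<bar> * 1 \<le> \<bar>n1\<bar> * \<bar>n2\<bar>" by (intro mult_left_mono) auto
  then have "\<bar>n1\<bar> \<le> \<bar>n1 * n2\<bar>" by (simp add: abs_mult)
  also have "\<bar>n1 * n2\<bar> = n1 * n2" using ge0 by (simp del: of_int_mult add: of_int_mult[symmetric])
  finally have "\<bar>n1\<bar> \<le> 4" using le4 by linarith
  then show ?thesis using n1 by simp
qed

definition sig where "sig \<gamma> = restrict (\<lambda>\<beta>. 2 * B \<beta> \<gamma> / B \<beta> \<beta>) P"

lemma sig_finite: "finite (sig ` R)"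
proof -
  have fin: "finite {x::real. x \<in> \<int> \<and> \<bar>x\<bar> \<le> 4}"
  proof -
    have "{x::real. x \<in> \<int> \<and> \<bar>x\<bar> \<le> 4} \<subseteq> of_int ` {-4..4}"
    proof
      fix x :: real assume "x \<in> {x. x \<in> \<int> \<and> \<bar>x\<bar> \<le> 4}"
      then obtain k :: int where "x = of_int k" "\<bar>x\<bar> \<le> 4" by (auto elim: Ints_cases)
      then show "x \<in> of_int ` {-4..4}" by (intro image_eqI[of _ _ k]) auto
    qed
    then show ?thesis by (rule finite_subset) simp
  qed
  have "sig ` R \<subseteq> PiE P (\<lambda>_. {x::real. x \<in> \<int> \<and> \<bar>x\<bar> \<le> 4})"
    unfolding sig_def using copint copair_bound P_sub by auto
  then show ?thesis using finite_PiE[OF P_fin, of "\<lambda>_. {x::real. x \<in> \<int> \<and> \<bar>x\<bar> \<le> 4}"] fin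
    by (meson finite_subset)
qed

lemma sig_eq_rad:
  assumes "\<gamma> \<in> R" "\<gamma>' \<in> R" "sig \<gamma> = sig \<gamma>'" shows "\<gamma>' - \<gamma> \<in> rad B UNIV"
proof (rule orth_P_rad)
  fix \<beta> assume b: "\<beta> \<in> P"
  have "2 * B \<beta> \<gamma> / B \<beta> \<beta> = 2 * B \<beta> \<gamma>' / B \<beta> \<beta>"
    using fun_cong[OF assms(3), of \<beta>] b unfolding sig_def by simp
  then have "B \<beta> \<gamma> = B \<beta> \<gamma>'" using Bne b P_sub by (auto simp: field_simps)
  then show "B \<beta> (\<gamma>' - \<gamma>) = 0" by (simp add: diff2)
qed

lemma Phi_contra:
  assumes n: "n \<noteq> 0" "n \<in> rad B UNIV" and Ml: "\<And>\<gamma>. \<gamma> \<in> R \<Longrightarrow> M \<gamma> \<subseteq> span {n}"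
  shows False
proof -
  define lam where "lam z = (z \<bullet> n) / (n \<bullet> n)" for z
  define q where "q z = z - lam z *\<^sub>R n" for z
  have nn: "n \<bullet> n \<noteq> 0" using n by simp
  have lin_q: "linear q" unfolding q_def lam_def
    by (rule linearI) (auto simp: inner_add_left algebra_simps add_divide_distrib scaleR_add_left)
  have qn: "q (t *\<^sub>R n) = 0" for t unfolding q_def lam_def using nn by simp
  have q_span: "q z = 0" if "z \<in> span {n}" for z using that qn by (auto simp: span_singleton)
  have zq: "z = q z + lam z *\<^sub>R n" for z unfolding q_def by simp
  have lamn_rad: "t *\<^sub>R n \<in> rad B UNIV" for t using n(2) subspace_rad by (simp add: subspace_mul)
  have Bq: "B (q z) w = B z w" for z w unfolding q_def using rad_null(1)[OF lamn_rad] by (simp add: diff1)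
  have qq: "q (q z) = q z" for z
    using linear_diff[OF lin_q, of z "lam z *\<^sub>R n"] qn unfolding q_def[of z] by simp
  have q_class: "q \<gamma>' = q \<gamma>" if "\<gamma> \<in> R" "\<gamma>' \<in> R" "sig \<gamma> = sig \<gamma>'" for \<gamma> \<gamma>'
  proof -
    have "\<gamma>' - \<gamma> \<in> M \<gamma>" unfolding M_def using sig_eq_rad[OF that] that by simp
    then have "q (\<gamma>' - \<gamma>) = 0" using Ml[OF that(1)] q_span by blast
    then show ?thesis using linear_diff[OF lin_q] by simp
  qed
  define F where "F = q ` R"
  have finF: "finite F"
  proof -
    define ch where "ch s = (SOME \<gamma>. \<gamma> \<in> R \<and> sig \<gamma> = s)" for s
    have "F \<subseteq> (\<lambda>s. q (ch s)) ` (sig ` R)"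
    proof
      fix f assume "f \<in> F"
      then obtain \<gamma> where g: "\<gamma> \<in> R" "f = q \<gamma>" unfolding F_def by blast
      have "\<exists>\<gamma>'. \<gamma>' \<in> R \<and> sig \<gamma>' = sig \<gamma>" using g by blast
      then have c: "ch (sig \<gamma>) \<in> R" "sig (ch (sig \<gamma>)) = sig \<gamma>" unfolding ch_def by (metis (mono_tags, lifting) someI_ex)+
      have "q (ch (sig \<gamma>)) = q \<gamma>" using q_class[OF g(1) c(1) c(2)[symmetric]] .
      then show "f \<in> (\<lambda>s. q (ch s)) ` (sig ` R)" by (intro image_eqI[of _ _ "sig \<gamma>"]) (use g in auto)
    qed
    then show ?thesis using sig_finite by (meson finite_imageI finite_subset)
  qed
  define Phi where "Phi w = (\<Sum>f\<in>F. B f w *\<^sub>R f)" for w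
  define H where "H = {Phi w + t *\<^sub>R n | w t. True}"
  have Phi_add: "Phi (w1 + w2) = Phi w1 + Phi w2" for w1 w2
    unfolding Phi_def by (simp add: add2 scaleR_add_left sum.distrib)
  have Phi_scale: "Phi (c *\<^sub>R w) = c *\<^sub>R Phi w" for c w
    unfolding Phi_def by (simp add: scale2 scaleR_sum_right)
  have subH: "subspace H"
    unfolding subspace_def H_def
  proof (intro conjI allI impI ballI)
    show "0 \<in> {Phi w + t *\<^sub>R n |w t. True}" by (rule CollectI, rule exI[of _ 0], rule exI[of _ 0]) (simp add: Phi_def)
  next
    fix x y assume "x \<in> {Phi w + t *\<^sub>R n |w t. True}" "y \<in> {Phi w + t *\<^sub>R n |w t. True}"
    then obtain w1 t1 w2 t2 where "x = Phi w1 + t1 *\<^sub>R n" "y = Phi w2 + t2 *\<^sub>R n" by blast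
    then have "x + y = Phi (w1 + w2) + (t1 + t2) *\<^sub>R n" by (simp add: Phi_add algebra_simps)
    then show "x + y \<in> {Phi w + t *\<^sub>R n |w t. True}" by blast
  next
    fix c :: real and x assume "x \<in> {Phi w + t *\<^sub>R n |w t. True}"
    then obtain w1 t1 where "x = Phi w1 + t1 *\<^sub>R n" by blast
    then have "c *\<^sub>R x = Phi (c *\<^sub>R w1) + (c * t1) *\<^sub>R n" by (simp add: Phi_scale algebra_simps)
    then show "c *\<^sub>R x \<in> {Phi w + t *\<^sub>R n |w t. True}" by blast
  qed
  have stab: "sr \<sigma> h \<in> H" if s: "\<sigma> \<in> R" and h: "h \<in> H" for \<sigma> h
  proof -
    obtain w t where hw: "h = Phi w + t *\<^sub>R n" using h unfolding H_def by blast
    define g where "g f = q (sr \<sigma> f)" for f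
    have gF: "g f \<in> F" if "f \<in> F" for f
    proof -
      obtain \<gamma> where gm: "\<gamma> \<in> R" "f = q \<gamma>" using \<open>f \<in> F\<close> unfolding F_def by blast
      have "sr \<sigma> f = sr \<sigma> \<gamma> - lam \<gamma> *\<^sub>R sr \<sigma> n"
        unfolding gm q_def using linear_diff[OF linear_sr] linear_scale[OF linear_sr] by simp
      then have "g f = q (sr \<sigma> \<gamma>)" unfolding g_def
        using linear_diff[OF lin_q] qn sr_null[OF n(2)] by simp
      then show ?thesis unfolding F_def using srR[OF s gm(1)] by blast
    qed
    have ggF: "g (g f) = f" if "f \<in> F" for f
    proof -
      obtain \<gamma> where gm: "\<gamma> \<in> R" "f = q \<gamma>" using \<open>f \<in> F\<close> unfolding F_def by blast
      have gen: "g z = q (sr \<sigma> z')" if "z = q z'" for z z'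
      proof -
        have "sr \<sigma> z = sr \<sigma> z' - lam z' *\<^sub>R sr \<sigma> n"
          unfolding that q_def using linear_diff[OF linear_sr] linear_scale[OF linear_sr] by simp
        then show ?thesis unfolding g_def
          using linear_diff[OF lin_q] qn sr_null[OF n(2)] by simp
      qed
      have "g (g f) = q (sr \<sigma> (sr \<sigma> \<gamma>))" using gen[OF gen[OF gm(2)]] .
      also have "\<dots> = f" using sr_invol[OF Bne[OF s]] gm by simp
      finally show ?thesis .
    qed
    have bij: "bij_betw g F F"
      by (rule bij_betwI[where g=g]) (auto simp: gF ggF)
    have Bg: "B (g f) (sr \<sigma> w) = B f w" for f
      unfolding g_def Bq using sr_pair[OF Bne[OF s]] .
    have "Phi (sr \<sigma> w) = (\<Sum>f\<in>F. B (g f) (sr \<sigma> w) *\<^sub>R g f)"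
      unfolding Phi_def using sum.reindex_bij_betw[OF bij, of "\<lambda>f. B f (sr \<sigma> w) *\<^sub>R f"] by simp
    also have "\<dots> = (\<Sum>f\<in>F. B f w *\<^sub>R g f)" using Bg by simp
    finally have P1: "Phi (sr \<sigma> w) = (\<Sum>f\<in>F. B f w *\<^sub>R g f)" .
    have "sr \<sigma> (Phi w) = (\<Sum>f\<in>F. B f w *\<^sub>R sr \<sigma> f)"
      unfolding Phi_def linear_sum[OF linear_sr] linear_scale[OF linear_sr] ..
    also have "\<dots> = (\<Sum>f\<in>F. B f w *\<^sub>R (g f + lam (sr \<sigma> f) *\<^sub>R n))"
      by (rule sum.cong) (simp_all add: g_def q_def)
    also have "\<dots> = (\<Sum>f\<in>F. B f w *\<^sub>R g f) + (\<Sum>f\<in>F. B f w * lam (sr \<sigma> f)) *\<^sub>R n"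
      by (simp add: scaleR_add_right sum.distrib scaleR_sum_left)
    finally have "sr \<sigma> (Phi w) = Phi (sr \<sigma> w) + (\<Sum>f\<in>F. B f w * lam (sr \<sigma> f)) *\<^sub>R n"
      using P1 by simp
    moreover have "sr \<sigma> h = sr \<sigma> (Phi w) + t *\<^sub>R n"
      unfolding hw using linear_add[OF linear_sr] linear_scale[OF linear_sr] sr_null[OF n(2)] by simp
    ultimately have "sr \<sigma> h = Phi (sr \<sigma> w) + ((\<Sum>f\<in>F. B f w * lam (sr \<sigma> f)) + t) *\<^sub>R n"
      by (simp add: algebra_simps)
    then show ?thesis unfolding H_def by blast
  qed
  have Phi_rad: "Phi w = 0" if "Phi w \<in> rad B UNIV" for w
  proof -
    have "B (Phi w) w = (\<Sum>f\<in>F. B f w * B f w)" unfolding Phi_def by (simp add: sum1 scale1)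
    then have "(\<Sum>f\<in>F. B f w * B f w) = 0" using rad_null(1)[OF that] by simp
    then have "\<forall>f\<in>F. B f w * B f w = 0" using finF by (subst (asm) sum_nonneg_eq_0_iff) auto
    then show ?thesis unfolding Phi_def by simp
  qed
  have RH: "R \<subseteq> H"
  proof
    fix \<gamma> assume g: "\<gamma> \<in> R"
    have zH: "Phi \<gamma> \<in> H" unfolding H_def by (rule CollectI, rule exI[of _ \<gamma>], rule exI[of _ 0]) simp
    have "B \<gamma> (Phi \<gamma>) = (\<Sum>f\<in>F. B f \<gamma> * B f \<gamma>)"
      unfolding Phi_def by (simp add: sum2 scale2 sym[of \<gamma>])
    also have "\<dots> \<ge> B (q \<gamma>) \<gamma> * B (q \<gamma>) \<gamma>"
      using finF g unfolding F_def by (intro member_le_sum) auto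
    finally have "B \<gamma> (Phi \<gamma>) \<ge> B \<gamma> \<gamma> * B \<gamma> \<gamma>" unfolding Bq .
    moreover have "B \<gamma> \<gamma> * B \<gamma> \<gamma> > 0" using Bpos[OF g] by simp
    ultimately have nz: "B \<gamma> (Phi \<gamma>) \<noteq> 0" by linarith
    define c where "c = 2 * B \<gamma> (Phi \<gamma>) / B \<gamma> \<gamma>"
    have c0: "c \<noteq> 0" unfolding c_def using nz Bne[OF g] by simp
    have "Phi \<gamma> - sr \<gamma> (Phi \<gamma>) \<in> H" using subspace_diff[OF subH zH stab[OF g zH]] .
    then have "c *\<^sub>R \<gamma> \<in> H" unfolding sr_def c_def by simp
    then have "(1 / c) *\<^sub>R (c *\<^sub>R \<gamma>) \<in> H" using subH by (rule subspace_mul[rotated])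
    then show "\<gamma> \<in> H" using c0 by simp
  qed
  then have UH: "UNIV \<subseteq> H" using span_minimal[OF RH subH] spanR by simp
  have "\<not> (a \<in> span {n} \<and> bb \<in> span {n})"
  proof
    assume "a \<in> span {n} \<and> bb \<in> span {n}"
    then have "span {a, bb} \<subseteq> span {n}" by (simp add: span_minimal)
    then have "dim (span {a, bb}) \<le> dim (span {n})" by (rule dim_subset)
    moreover have "dim (span {n}) \<le> 1" using dim_le_card[of "span {n}" "{n}"] by simp
    ultimately show False using rad_span_ab dimrad by simp
  qed
  then obtain b' where b': "b' \<in> rad B UNIV" "b' \<notin> span {n}"
    using a_rad bb_mem(2) by blast
  obtain w t where bw: "b' = Phi w + t *\<^sub>R n" using UH unfolding H_def by blast
  then have "Phi w = b' - t *\<^sub>R n" by simp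
  also have "\<dots> \<in> rad B UNIV" using b'(1) lamn_rad subspace_rad by (simp add: subspace_diff)
  finally have "Phi w = 0" using Phi_rad by simp
  then have "b' = t *\<^sub>R n" using bw by simp
  then show False using b'(2) by (auto simp: span_singleton)
qed

end


context ell
begin

lemma KL:
  assumes v: "v \<in> int_span R" "v \<in> rad B UNIV" and g0: "\<gamma>0 \<in> R"
  shows "Qv v \<gamma>0"
proof (rule ccontr)
  assume nq0: "\<not> Qv v \<gamma>0"
  have allnot: "\<not> Qv v \<gamma>" if "\<gamma> \<in> R" for \<gamma>
  proof
    assume q: "Qv v \<gamma>"
    have "{\<gamma>\<in>R. Qv v \<gamma>} = R"
      by (rule conn_all) (use q that Qv_prop[OF v(2)] in auto)
    then show False using nq0 g0 by blast
  qed
  show False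
  proof (cases "\<exists>\<gamma>1\<in>R. \<exists>x1\<in>M \<gamma>1. x1 \<noteq> 0")
    case True
    then obtain \<gamma>1 x1 where g1: "\<gamma>1 \<in> R" "x1 \<in> M \<gamma>1" "x1 \<noteq> 0" by blast
    have x1r: "x1 \<in> rad B UNIV" using g1 unfolding M_def by simp
    have "{\<gamma>\<in>R. M \<gamma> \<subseteq> span {x1}} = R"
    proof (rule conn_all)
      show "{\<gamma>\<in>R. M \<gamma> \<subseteq> span {x1}} \<noteq> {}"
      proof -
        have "M \<gamma>1 \<subseteq> span {x1}"
        proof
          fix y assume y: "y \<in> M \<gamma>1"
          obtain r s where rs: "r \<noteq> 0 \<or> s \<noteq> 0" "r *\<^sub>R x1 + s *\<^sub>R y = 0"
            using LD[OF g1(1,2) y _ allnot[OF g1(1)]] v by blast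
          have "s \<noteq> 0" using rs g1(3) by auto
          have "s *\<^sub>R y = - (r *\<^sub>R x1)" using rs(2) by (simp add: eq_neg_iff_add_eq_0 add.commute)
          then have "(1 / s) *\<^sub>R (s *\<^sub>R y) = (1 / s) *\<^sub>R (- (r *\<^sub>R x1))" by simp
          then have "y = (- r / s) *\<^sub>R x1" using \<open>s \<noteq> 0\<close> by simp
          then show "y \<in> span {x1}" using span_mul[OF span_base[OF singletonI[of x1]], of "-r/s"] by simp
        qed
        then show ?thesis using g1 by blast
      qed
    next
      fix \<delta> \<gamma> assume d: "\<delta> \<in> {\<gamma>\<in>R. M \<gamma> \<subseteq> span {x1}}" and g: "\<gamma> \<in> R" and ne: "B \<delta> \<gamma> \<noteq> 0"
      have "M \<gamma> \<subseteq> span {x1}"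
      proof
        fix y assume y: "y \<in> M \<gamma>"
        have yr: "y \<in> rad B UNIV" "\<gamma> + y \<in> R" using y unfolding M_def by auto
        define c where "c = 2 * B \<gamma> \<delta> / B \<gamma> \<gamma>"
        have c0: "c \<noteq> 0" unfolding c_def using ne sym Bne[OF g] by auto
        have "\<delta> + c *\<^sub>R y \<in> R" unfolding c_def using T(1)[OF g yr] d by blast
        moreover have "c *\<^sub>R y \<in> rad B UNIV" using yr subspace_rad by (simp add: subspace_mul)
        ultimately have "c *\<^sub>R y \<in> M \<delta>" unfolding M_def by simp
        then have "c *\<^sub>R y \<in> span {x1}" using d by blast
        then have "(1 / c) *\<^sub>R (c *\<^sub>R y) \<in> span {x1}" by (rule span_mul)
        then show "y \<in> span {x1}" using c0 by simp
      qed
      then show "\<gamma> \<in> {\<gamma>\<in>R. M \<gamma> \<subseteq> span {x1}}" using g by blast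
    qed auto
    then show False using Phi_contra[OF g1(3) x1r] by blast
  next
    case False
    have "M \<gamma> \<subseteq> span {a}" if "\<gamma> \<in> R" for \<gamma>
    proof
      fix x assume "x \<in> M \<gamma>"
      then have "x = 0" using False that by blast
      then show "x \<in> span {a}" by (simp add: span_zero)
    qed
    then show False using Phi_contra[OF a_ne0 a_rad] by blast
  qed
qed

lemma part1: "\<gamma> \<in> R \<Longrightarrow> \<exists>k::int. k \<noteq> 0 \<and> \<gamma> + of_int k *\<^sub>R a \<in> R"
  using KL[OF a_int a_rad] unfolding Qv_def by blast

lemma KLb: "\<gamma> \<in> R \<Longrightarrow> \<exists>k::int. k \<noteq> 0 \<and> \<gamma> + of_int k *\<^sub>R bb \<in> R"
  using KL[OF bb_mem] unfolding Qv_def by blast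

lemma iter:
  assumes g: "\<gamma> \<in> R" and v: "v \<in> rad B UNIV" and m: "\<gamma> + of_int m *\<^sub>R v \<in> R"
  shows "\<gamma> + of_int (2 * j * m) *\<^sub>R v \<in> R"
proof -
  have x: "of_int m *\<^sub>R v \<in> M \<gamma>" unfolding M_def using m v subspace_rad by (simp add: subspace_mul)
  have "0 + of_int (2 * j) *\<^sub>R (of_int m *\<^sub>R v) \<in> M \<gamma>" using M_int[OF g x M0[OF g]] .
  then show ?thesis unfolding M_def by (simp add: mult.assoc)
qed

end


lemma indep_int_indep: "independent (X :: 'v::euclidean_space set) \<Longrightarrow> int_independent X"
  unfolding int_independent_def
proof (intro allI impI ballI)
  fix F c x assume X: "independent X" and h: "finite F \<and> F \<subseteq> X \<and> (\<Sum>x\<in>F. real_of_int (c x) *\<^sub>R x) = 0"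
    and x: "x \<in> F"
  have iF: "independent F" by (rule independent_mono[OF X]) (use h in auto)
  have "\<forall>v\<in>F. real_of_int (c v) = 0"
    using iF unfolding independent_explicit by (elim conjE allE[of _ "\<lambda>v. real_of_int (c v)"]) (use h in blast)
  then show "c x = 0" using x by simp
qed

lemma int_span_insert_decomp:
  assumes "z \<in> int_span (insert x S)"
  shows "\<exists>s t. s \<in> int_span S \<and> z = s + of_int t *\<^sub>R x"
proof -
  obtain F c where z: "z = (\<Sum>y\<in>F. of_int (c y) *\<^sub>R y)" "finite F" "F \<subseteq> insert x S"
    using assms unfolding int_span_def by blast
  have F': "F - {x} \<subseteq> S" "finite (F - {x})" using z by auto
  have s: "(\<Sum>y\<in>F - {x}. of_int (c y) *\<^sub>R y) \<in> int_span S" using int_span_intro[OF F'(2,1)] .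
  show ?thesis
  proof (cases "x \<in> F")
    case True
    then have "z = (\<Sum>y\<in>F - {x}. of_int (c y) *\<^sub>R y) + of_int (c x) *\<^sub>R x"
      unfolding z(1) using z(2) by (simp add: sum.remove add.commute)
    then show ?thesis using s by blast
  next
    case False
    then have "z = (\<Sum>y\<in>F - {x}. of_int (c y) *\<^sub>R y) + of_int 0 *\<^sub>R x" unfolding z(1) by simp
    then show ?thesis using s by blast
  qed
qed

lemma int_span_insert_mem:
  "s \<in> int_span S \<Longrightarrow> s + of_int t *\<^sub>R x \<in> int_span (insert x S)"
  by (meson int_span_add int_span_base int_span_mono int_span_scale insertI1 subset_insertI subsetD)

context ell
begin

lemma a_notin_P: "a \<notin> P" using P_sub R_nonrad a_rad by blast

lemma DIM_ge2: "DIM('v) \<ge> 2" using dimrad dim_subset_UNIV[of "rad B UNIV"] by (simp add: dim_UNIV)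

lemma indep_Pa: "independent (insert a P)"
proof -
  have "card (insert a P) = DIM('v)" using cardP P_fin a_notin_P DIM_ge2 by simp
  then show ?thesis using card_eq_dim[of "insert a P" UNIV] span_Pa P_fin by (simp add: dim_UNIV)
qed

lemma coord_zero:
  assumes "(\<Sum>u\<in>P. c u *\<^sub>R u) + t *\<^sub>R a = 0" shows "(\<forall>u\<in>P. c u = 0) \<and> t = 0"
proof -
  define e where "e u = (if u = a then t else c u)" for u
  have "(\<Sum>u\<in>insert a P. e u *\<^sub>R u) = 0"
    using assms P_fin a_notin_P unfolding e_def
    by (simp add: sum.insert add.commute) (smt (verit) sum.cong)
  then have "\<forall>u\<in>insert a P. e u = 0" using indep_Pa unfolding independent_explicit
    by (elim conjE allE[of _ e]) blast
  then show ?thesis unfolding e_def using a_notin_P by (metis insertCI)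
qed

lemma coord_unique:
  assumes "(\<Sum>u\<in>P. c u *\<^sub>R u) + t *\<^sub>R a = (\<Sum>u\<in>P. d u *\<^sub>R u) + s *\<^sub>R a"
  shows "(\<forall>u\<in>P. c u = d u) \<and> t = s"
proof -
  have "(\<Sum>u\<in>P. (c u - d u) *\<^sub>R u) + (t - s) *\<^sub>R a = 0"
    using assms by (simp add: scaleR_diff_left sum_subtractf algebra_simps)
  then show ?thesis using coord_zero by fastforce
qed

lemma coord_exists: "\<exists>c t. v = (\<Sum>u\<in>P. c u *\<^sub>R u) + t *\<^sub>R a"
proof -
  have "v \<in> span (insert a P)" using span_Pa by simp
  then obtain e where e: "v = (\<Sum>u\<in>insert a P. e u *\<^sub>R u)" using span_finite[of "insert a P"] P_fin by auto
  then have "v = (\<Sum>u\<in>P. e u *\<^sub>R u) + e a *\<^sub>R a" using P_fin a_notin_P by (simp add: sum.insert add.commute)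
  then show ?thesis by blast
qed

lemma inj_p_P: "inj_on p P"
proof (rule ccontr)
  assume "\<not> inj_on p P"
  then obtain u u' where uu: "u \<in> P" "u' \<in> P" "u \<noteq> u'" "p u = p u'" unfolding inj_on_def by blast
  then have "p (u' - u) = 0" using linear_diff[OF lin_p] by simp
  then obtain t where t: "u' - u = t *\<^sub>R a" using ker_p by (auto simp: span_singleton)
  define Q where "Q = insert a (P - {u'})"
  have "insert a P \<subseteq> span Q"
  proof
    fix x assume "x \<in> insert a P"
    show "x \<in> span Q"
    proof (cases "x = u'")
      case True
      have "u \<in> span Q" "a \<in> span Q" unfolding Q_def using uu by (auto intro: span_base)
      then have "u + t *\<^sub>R a \<in> span Q" by (simp add: span_add span_mul)
      then show ?thesis using True t by (simp add: algebra_simps)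
    next
      case False then show ?thesis unfolding Q_def using \<open>x \<in> insert a P\<close> by (auto intro: span_base)
    qed
  qed
  then have "span (insert a P) \<subseteq> span Q" by (simp add: span_minimal)
  then have "UNIV \<subseteq> span Q" using span_Pa by simp
  then have "dim (UNIV::'v set) \<le> card Q"
    using dim_le_card[of UNIV Q] P_fin unfolding Q_def by simp
  moreover have "card Q \<le> card P" unfolding Q_def using P_fin uu(2) a_notin_P
    by (simp add: card_insert_if) (metis One_nat_def Suc_pred card_gt_0_iff empty_iff le_refl)
  ultimately show False using cardP DIM_ge2 by (simp add: dim_UNIV)
qed

lemma root_coord:
  assumes g: "\<gamma> \<in> R"
  shows "\<exists>c t. \<gamma> = (\<Sum>u\<in>P. of_int (c u) *\<^sub>R u) + of_int t *\<^sub>R a \<and>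
           ((\<forall>u\<in>P. 0 \<le> c u) \<or> (\<forall>u\<in>P. c u \<le> 0))"
proof -
  have base_eq: "p ` R = (p ` R \<inter> nonneg_int_comb (p ` P)) \<union> (p ` R \<inter> nonpos_int_comb (p ` P))"
    using base unfolding is_base_def by auto
  have "p \<gamma> \<in> p ` R" using g by simp
  then have "p \<gamma> \<in> nonneg_int_comb (p ` P) \<or> p \<gamma> \<in> nonpos_int_comb (p ` P)" using base_eq by blast
  then obtain c0 :: "'w \<Rightarrow> int" where c0: "p \<gamma> = (\<Sum>x\<in>p ` P. of_int (c0 x) *\<^sub>R x)"
    "(\<forall>x\<in>p ` P. 0 \<le> c0 x) \<or> (\<forall>x\<in>p ` P. c0 x \<le> 0)"
    unfolding nonneg_int_comb_def nonpos_int_comb_def by blast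
  define c where "c u = c0 (p u)" for u
  have "p \<gamma> = (\<Sum>u\<in>P. of_int (c u) *\<^sub>R p u)"
    unfolding c0(1) c_def using sum.reindex[OF inj_p_P, of "\<lambda>x. of_int (c0 x) *\<^sub>R x"] by simp
  also have "\<dots> = p (\<Sum>u\<in>P. of_int (c u) *\<^sub>R u)"
    by (simp add: linear_sum[OF lin_p] linear_scale[OF lin_p])
  finally have "p (\<gamma> - (\<Sum>u\<in>P. of_int (c u) *\<^sub>R u)) = 0" using linear_diff[OF lin_p] by simp
  then obtain t where t: "\<gamma> - (\<Sum>u\<in>P. of_int (c u) *\<^sub>R u) = t *\<^sub>R a" using ker_p by (auto simp: span_singleton)
  have "(\<Sum>u\<in>P. of_int (c u) *\<^sub>R u) \<in> int_span R" using int_span_intro[OF P_fin P_sub] .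
  then have "t *\<^sub>R a \<in> int_span R" unfolding t[symmetric] using int_span_diff R_int g by blast
  then obtain k where k: "t = of_int k" using ZR_line Ints_cases by metis
  have "\<gamma> = (\<Sum>u\<in>P. of_int (c u) *\<^sub>R u) + of_int k *\<^sub>R a" using t k by (simp add: algebra_simps)
  moreover have "(\<forall>u\<in>P. 0 \<le> c u) \<or> (\<forall>u\<in>P. c u \<le> 0)" using c0(2) unfolding c_def by auto
  ultimately show ?thesis by blast
qed

end


locale ellS = ell B R P a p
  for B :: "'v::euclidean_space \<Rightarrow> 'v \<Rightarrow> real"
    and R P :: "'v set" and a :: 'v
    and p :: "'v \<Rightarrow> 'w::euclidean_space" +
  fixes S :: "'v set"
  assumes Sne: "S \<noteq> {}" and SP: "S \<subset> P" and Sconn: "connected_set B S"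
begin

abbreviation "VS \<equiv> span (S \<union> {a})"
abbreviation "RS \<equiv> R \<inter> span (S \<union> {a})"

lemma S_sub: "S \<subseteq> P" using SP by auto
lemma S_fin: "finite S" using S_sub P_fin finite_subset by blast
lemma S_R: "S \<subseteq> R" using S_sub P_sub by auto
lemma S_VS: "S \<subseteq> VS" by (meson span_superset subset_trans sup_ge1)
lemma a_VS: "a \<in> VS" by (simp add: span_base)
lemma S_RS: "S \<subseteq> RS" using S_R S_VS by auto
lemma a_notin_S: "a \<notin> S" using a_notin_P S_sub by auto

lemma inVS:
  assumes x: "x = (\<Sum>u\<in>P. c u *\<^sub>R u) + t *\<^sub>R a"
  shows "x \<in> VS \<longleftrightarrow> (\<forall>u\<in>P - S. c u = 0)"
proof
  assume h: "\<forall>u\<in>P - S. c u = 0"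
  have "(\<Sum>u\<in>P. c u *\<^sub>R u) = (\<Sum>u\<in>S. c u *\<^sub>R u)"
    using h S_sub P_fin by (intro sum.mono_neutral_right) auto
  moreover have "(\<Sum>u\<in>S. c u *\<^sub>R u) \<in> VS"
    using S_VS by (intro span_sum span_mul) (auto intro: span_base)
  ultimately show "x \<in> VS" unfolding x using a_VS by (simp add: span_add span_mul)
next
  assume "x \<in> VS"
  then have "x \<in> span (insert a S)" by simp
  then obtain e where e: "x = (\<Sum>y\<in>insert a S. e y *\<^sub>R y)" using span_finite[of "insert a S"] S_fin by auto
  then have x2: "x = (\<Sum>u\<in>S. e u *\<^sub>R u) + e a *\<^sub>R a" using S_fin a_notin_S by (simp add: sum.insert add.commute)
  define d where "d u = (if u \<in> S then e u else 0)" for u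
  have "(\<Sum>u\<in>P. d u *\<^sub>R u) = (\<Sum>u\<in>S. e u *\<^sub>R u)"
    unfolding d_def using S_sub P_fin by (intro sum.mono_neutral_cong_right) auto
  then have "(\<Sum>u\<in>P. c u *\<^sub>R u) + t *\<^sub>R a = (\<Sum>u\<in>P. d u *\<^sub>R u) + e a *\<^sub>R a" using x x2 by simp
  then have "\<forall>u\<in>P. c u = d u" using coord_unique by blast
  then show "\<forall>u\<in>P - S. c u = 0" unfolding d_def by auto
qed

lemma rootS:
  assumes g: "\<gamma> \<in> RS"
  shows "\<exists>c t. \<gamma> = (\<Sum>u\<in>S. of_int (c u) *\<^sub>R u) + of_int t *\<^sub>R a \<and>
           ((\<forall>u\<in>S. 0 \<le> c u) \<or> (\<forall>u\<in>S. c u \<le> 0))"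
proof -
  obtain c t where ct: "\<gamma> = (\<Sum>u\<in>P. of_int (c u) *\<^sub>R u) + of_int t *\<^sub>R a"
    "(\<forall>u\<in>P. 0 \<le> c u) \<or> (\<forall>u\<in>P. c u \<le> 0)" using root_coord g by blast
  have "\<forall>u\<in>P - S. real_of_int (c u) = 0" using inVS[OF ct(1)] g by blast
  then have "(\<Sum>u\<in>P. of_int (c u) *\<^sub>R u) = (\<Sum>u\<in>S. of_int (c u) *\<^sub>R u)"
    using S_sub P_fin by (intro sum.mono_neutral_right) auto
  moreover have "(\<forall>u\<in>S. 0 \<le> c u) \<or> (\<forall>u\<in>S. c u \<le> 0)" using ct(2) S_sub by blast
  ultimately show ?thesis using ct(1) by (intro exI[of _ c] exI[of _ t]) simp
qed

lemma radVS: "rad B UNIV \<inter> VS = span {a}"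
proof
  show "span {a} \<subseteq> rad B UNIV \<inter> VS"
    using a_rad a_VS subspace_rad by (simp add: span_minimal subspace_inter)
next
  show "rad B UNIV \<inter> VS \<subseteq> span {a}"
  proof (rule ccontr)
    assume "\<not> rad B UNIV \<inter> VS \<subseteq> span {a}"
    then obtain n where n: "n \<in> rad B UNIV" "n \<in> VS" "n \<notin> span {a}" by blast
    have "a \<noteq> bb" using bb(2)[of 1 "-1"] by auto
    obtain e where e: "n = (\<Sum>y\<in>{a, bb}. e y *\<^sub>R y)"
      using n(1) rad_span_ab span_finite[of "{a, bb}"] by auto
    then have n2: "n = e a *\<^sub>R a + e bb *\<^sub>R bb" using \<open>a \<noteq> bb\<close> by simp
    have s0: "e bb \<noteq> 0"
    proof
      assume "e bb = 0"
      then have "n = e a *\<^sub>R a" using n2 by simp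
      then show False using n(3) by (simp add: span_mul span_base)
    qed
    have "bb = (1 / e bb) *\<^sub>R (n - e a *\<^sub>R a)" using n2 s0 by simp
    also have "\<dots> \<in> VS" using n(2) a_VS by (simp add: span_mul span_diff)
    finally have bbVS: "bb \<in> VS" .
    obtain d s' where ds: "bb = (\<Sum>u\<in>P. d u *\<^sub>R u) + s' *\<^sub>R a" using coord_exists by blast
    have d0: "\<forall>u\<in>P - S. d u = 0" using inVS[OF ds] bbVS by blast
    obtain u0 where u0: "u0 \<in> S" "d u0 \<noteq> 0"
    proof (rule ccontr)
      assume "\<not> thesis"
      then have "\<forall>u\<in>P. d u = 0" using that d0 by blast
      then have "bb = s' *\<^sub>R a" using ds by simp
      then have "s' *\<^sub>R a + (-1) *\<^sub>R bb = 0" by simp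
      then show False using ab_indep by fastforce
    qed
    obtain u' where u': "u' \<in> P" "u' \<notin> S" using SP by blast
    have u'R: "u' \<in> R" using u' P_sub by auto
    obtain m :: int where m: "m \<noteq> 0" "u' + of_int m *\<^sub>R bb \<in> R" using KLb[OF u'R] by blast
    define j :: int where "j = (if d u0 > 0 then - m else m)"
    have neg: "of_int (2 * j * m) * d u0 < 0"
    proof -
      have "m * m > 0" using m(1) by (simp add: zero_less_mult_iff) (metis linorder_neqE_linordered_idom)
      then have "real_of_int (m * m) > 0" by (simp only: of_int_0_less_iff)
      then show ?thesis unfolding j_def using u0(2)
        by (auto simp: mult_pos_neg mult_neg_pos algebra_simps simp del: of_int_mult)
    qed
    define k :: int where "k = 2 * j * m"
    have rho: "u' + of_int k *\<^sub>R bb \<in> R" unfolding k_def using iter[OF u'R bb_mem(2) m(2)] .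
    define e2 where "e2 u = (if u = u' then 1 else 0) + of_int k * d u" for u
    have rep2: "u' + of_int k *\<^sub>R bb = (\<Sum>u\<in>P. e2 u *\<^sub>R u) + (of_int k * s') *\<^sub>R a"
    proof -
      have pw: "e2 u *\<^sub>R u = (if u = u' then u else 0) + of_int k *\<^sub>R (d u *\<^sub>R u)" for u
        unfolding e2_def by (simp add: scaleR_add_left)
      have "(\<Sum>u\<in>P. e2 u *\<^sub>R u) = (\<Sum>u\<in>P. (if u = u' then u else 0)) + of_int k *\<^sub>R (\<Sum>u\<in>P. d u *\<^sub>R u)"
        unfolding pw sum.distrib scaleR_sum_right ..
      also have "(\<Sum>u\<in>P. (if u = u' then u else 0)) = u'" using u'(1) P_fin by (simp add: sum.delta')
      finally show ?thesis unfolding ds by (simp add: algebra_simps)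
    qed
    obtain c t where ct: "u' + of_int k *\<^sub>R bb = (\<Sum>u\<in>P. of_int (c u) *\<^sub>R u) + of_int t *\<^sub>R a"
      "(\<forall>u\<in>P. 0 \<le> c u) \<or> (\<forall>u\<in>P. c u \<le> 0)" using root_coord[OF rho] by blast
    have "(\<Sum>u\<in>P. of_int (c u) *\<^sub>R u) + of_int t *\<^sub>R a = (\<Sum>u\<in>P. e2 u *\<^sub>R u) + (of_int k * s') *\<^sub>R a"
      using ct(1) rep2 by simp
    then have "\<forall>u\<in>P. real_of_int (c u) = e2 u" by (rule coord_unique[THEN conjunct1])
    then have c1: "real_of_int (c u') = 1" and c2: "real_of_int (c u0) = of_int k * d u0"
      using u' u0 S_sub d0 unfolding e2_def by auto
    have "c u' > 0" using c1 by simp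
    moreover have "c u0 < 0" using c2 neg unfolding k_def by simp
    ultimately show False using ct(2) u'(1) u0(1) S_sub by force
  qed
qed

end


context ellS
begin

lemma psd_VS: "psd_form_on VS B"
  using psdB unfolding psd_form_on_def by (auto simp: subspace_span)

lemma radB_VS: "rad B VS = span {a}"
  using radVS unfolding rad_def by auto

lemma dim_radVS: "dim (rad B VS) = 1"
proof -
  have "independent {a}" using a_ne0 by (simp add: independent_insertI independent_empty)
  then show ?thesis unfolding radB_VS by (simp add: dim_span dim_eq_card_independent)
qed

lemma RS_nonrad: "RS \<subseteq> VS - rad B VS"
  using R_nonrad unfolding rad_def by auto

lemma a_span_RS: "a \<in> span RS"
proof -
  obtain s where s: "s \<in> S" using Sne by blast
  have sR: "s \<in> R" using s S_R by auto
  obtain k :: int where k: "k \<noteq> 0" "s + of_int k *\<^sub>R a \<in> R" using part1[OF sR] by blast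
  have "s + of_int k *\<^sub>R a \<in> VS" using s S_VS a_VS by (simp add: span_add span_mul subsetD)
  then have "s + of_int k *\<^sub>R a \<in> span RS" "s \<in> span RS" using k s S_RS by (auto intro: span_base)
  then have "(s + of_int k *\<^sub>R a) - s \<in> span RS" by (rule span_diff)
  then have "of_int k *\<^sub>R a \<in> span RS" by simp
  then have "(1 / of_int k) *\<^sub>R (of_int k *\<^sub>R a) \<in> span RS" by (rule span_mul)
  then show ?thesis using k by simp
qed

lemma span_RS: "span RS = VS"
proof
  show "span RS \<subseteq> VS" by (simp add: span_minimal)
  have "S \<union> {a} \<subseteq> span RS" using S_RS a_span_RS by (auto intro: span_base)
  then show "VS \<subseteq> span RS" by (simp add: span_minimal)
qed

lemma sr_RS: "\<alpha> \<in> RS \<Longrightarrow> \<gamma> \<in> RS \<Longrightarrow> sr \<alpha> \<gamma> \<in> RS"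
  using srR unfolding sr_def by (auto simp: span_diff span_mul)

lemma refl_RS: "\<alpha> \<in> RS \<Longrightarrow> refl B \<alpha> ` RS = RS"
proof -
  assume al: "\<alpha> \<in> RS"
  have "sr \<alpha> ` RS = RS"
  proof
    show "sr \<alpha> ` RS \<subseteq> RS" using sr_RS al by auto
    show "RS \<subseteq> sr \<alpha> ` RS"
    proof
      fix \<gamma> assume g: "\<gamma> \<in> RS"
      have "\<gamma> = sr \<alpha> (sr \<alpha> \<gamma>)" using sr_invol Bne al by auto
      then show "\<gamma> \<in> sr \<alpha> ` RS" using sr_RS[OF al g] by blast
    qed
  qed
  then show ?thesis by (simp add: refl_eq[abs_def])
qed

lemma root_nonorth:
  assumes g: "\<gamma> \<in> RS" shows "\<exists>u\<in>S. B u \<gamma> \<noteq> 0"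
proof (rule ccontr)
  assume "\<not> (\<exists>u\<in>S. B u \<gamma> \<noteq> 0)"
  then have z: "\<forall>u\<in>S. B u \<gamma> = 0" by blast
  obtain c t where ct: "\<gamma> = (\<Sum>u\<in>S. of_int (c u) *\<^sub>R u) + of_int t *\<^sub>R a" using rootS[OF g] by blast
  have "B \<gamma> \<gamma> = (\<Sum>u\<in>S. of_int (c u) * B u \<gamma>) + of_int t * B a \<gamma>"
    by (subst (1) ct) (simp add: add1 sum1 scale1)
  also have "\<dots> = 0" using z rad_null(1)[OF a_rad] by simp
  finally show False using Bne g by simp
qed

lemma conn_RS: "connected_set B RS"
  unfolding connected_set_def
proof
  assume "\<exists>S'. S' \<noteq> {} \<and> S' \<subset> RS \<and> (\<forall>x\<in>S'. \<forall>y\<in>RS - S'. B x y = 0)"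
  then obtain S' where S': "S' \<noteq> {}" "S' \<subset> RS" "\<forall>x\<in>S'. \<forall>y\<in>RS - S'. B x y = 0" by blast
  have orth: "B x y = 0" if "x \<in> S'" "y \<in> RS - S'" for x y using S'(3) that by blast
  show False
  proof (cases "S \<subseteq> S'")
    case True
    obtain y where y: "y \<in> RS" "y \<notin> S'" using S'(2) by blast
    obtain u where u: "u \<in> S" "B u y \<noteq> 0" using root_nonorth[OF y(1)] by blast
    then show False using orth[of u y] True y by auto
  next
    case False
    show False
    proof (cases "S \<inter> S' = {}")
      case True
      obtain x where x: "x \<in> S'" using S'(1) by blast
      then have xR: "x \<in> RS" using S'(2) by auto
      obtain u where u: "u \<in> S" "B u x \<noteq> 0" using root_nonorth[OF xR] by blast
      have "u \<in> RS - S'" using u True S_RS by auto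
      then show False using orth[OF x] u sym by metis
    next
      case ne: False
      have "S \<inter> S' \<noteq> {} \<and> S \<inter> S' \<subset> S \<and> (\<forall>x\<in>S \<inter> S'. \<forall>y\<in>S - S \<inter> S'. B x y = 0)"
        using ne False orth S_RS by auto
      then have ex: "\<exists>S''. S'' \<noteq> {} \<and> S'' \<subset> S \<and> (\<forall>x\<in>S''. \<forall>y\<in>S - S''. B x y = 0)" by (rule exI)
      show False using Sconn ex unfolding connected_set_def by (rule notE)
    qed
  qed
qed

lemma indep_Sa: "independent (insert a S)"
  using independent_mono[OF indep_Pa] S_sub by blast

lemma dim_VS: "dim VS = card S + 1"
proof -
  have "dim VS = card (insert a S)"
    using indep_Sa by (simp add: dim_span dim_eq_card_independent)
  then show ?thesis using S_fin a_notin_S by simp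
qed

lemma RS_int_Sa: "int_span RS \<subseteq> int_span (insert a S)"
proof (rule int_span_subset, rule subsetI)
  fix \<gamma> assume g: "\<gamma> \<in> RS"
  obtain c t where ct: "\<gamma> = (\<Sum>u\<in>S. of_int (c u) *\<^sub>R u) + of_int t *\<^sub>R a" using rootS[OF g] by blast
  have "(\<Sum>u\<in>S. of_int (c u) *\<^sub>R u) \<in> int_span S" using int_span_intro[OF S_fin subset_refl] .
  then show "\<gamma> \<in> int_span (insert a S)" unfolding ct by (rule int_span_insert_mem)
qed

definition K where "K = {t::int. of_int t *\<^sub>R a \<in> int_span RS}"

lemma K_diff: "s \<in> K \<Longrightarrow> t \<in> K \<Longrightarrow> s - t \<in> K"
  unfolding K_def using int_span_diff by (fastforce simp: scaleR_diff_left)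
lemma K_mult: "t \<in> K \<Longrightarrow> j * t \<in> K"
proof -
  assume "t \<in> K"
  then have "of_int t *\<^sub>R a \<in> int_span RS" unfolding K_def by simp
  then have "of_int j *\<^sub>R (of_int t *\<^sub>R a) \<in> int_span RS" by (rule int_span_scale)
  then show ?thesis unfolding K_def by simp
qed

lemma K_pos: "\<exists>t. 0 < t \<and> t \<in> K"
proof -
  obtain s where s: "s \<in> S" using Sne by blast
  have sR: "s \<in> R" using s S_R by auto
  obtain k :: int where k: "k \<noteq> 0" "s + of_int k *\<^sub>R a \<in> R" using part1[OF sR] by blast
  have "s + of_int k *\<^sub>R a \<in> VS" using s S_VS a_VS by (simp add: span_add span_mul subsetD)
  then have "s + of_int k *\<^sub>R a \<in> int_span RS" "s \<in> int_span RS" using k s S_RS by (auto intro: int_span_base)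
  then have "(s + of_int k *\<^sub>R a) - s \<in> int_span RS" by (rule int_span_diff)
  then have kK: "k \<in> K" unfolding K_def by simp
  show ?thesis
  proof (cases "k > 0")
    case True then show ?thesis using kK by blast
  next
    case False
    then have "0 < (-1) * k" using k(1) by simp
    then show ?thesis using K_mult[OF kK, of "-1"] by blast
  qed
qed

definition kn where "kn = (LEAST n::nat. 0 < n \<and> int n \<in> K)"
definition kS where "kS = int kn"

lemma K_pos_nat: "\<exists>n::nat. 0 < n \<and> int n \<in> K"
proof -
  obtain t where "0 < t" "t \<in> K" using K_pos by blast
  then show ?thesis by (intro exI[of _ "nat t"]) simp
qed

lemma kn0: "0 < kn \<and> int kn \<in> K"
  unfolding kn_def by (rule LeastI_ex) (rule K_pos_nat)
lemma kS: "0 < kS" "kS \<in> K" using kn0 unfolding kS_def by auto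
lemma kS_le: "0 < t \<Longrightarrow> t \<in> K \<Longrightarrow> kS \<le> t"
proof -
  assume "0 < t" "t \<in> K"
  then have "kn \<le> nat t" unfolding kn_def by (intro Least_le) simp
  then show ?thesis unfolding kS_def using \<open>0 < t\<close> by simp
qed

lemma kS_dvd: "t \<in> K \<Longrightarrow> kS dvd t"
proof -
  assume t: "t \<in> K"
  have "t - (t div kS) * kS \<in> K" using K_diff[OF t K_mult[OF kS(2)]] .
  then have m: "t mod kS \<in> K" by (simp add: minus_div_mult_eq_mod)
  have "t mod kS = 0"
  proof (rule ccontr)
    assume "t mod kS \<noteq> 0"
    then have "0 < t mod kS" using kS(1) by (simp add: order_le_neq_trans)
    then have "kS \<le> t mod kS" using m kS_le by blast
    moreover have "t mod kS < kS" using kS(1) by simp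
    ultimately show False by simp
  qed
  then show ?thesis by (simp add: dvd_eq_mod_eq_0)
qed

lemma kn: "0 < kn" "of_nat kn = (of_int kS :: real)" using kn0 unfolding kS_def by auto

lemma int_span_RS_eq:
  "int_span RS = {s + of_int j *\<^sub>R (of_nat kn *\<^sub>R a) | s j. s \<in> int_span S}"
proof
  show "int_span RS \<subseteq> {s + of_int j *\<^sub>R (of_nat kn *\<^sub>R a) | s j. s \<in> int_span S}"
  proof
    fix z assume z: "z \<in> int_span RS"
    obtain s t where st: "s \<in> int_span S" "z = s + of_int t *\<^sub>R a"
      using int_span_insert_decomp RS_int_Sa z by blast
    have "s \<in> int_span RS" using st(1) int_span_mono[OF S_RS] by blast
    then have "z - s \<in> int_span RS" using z int_span_diff by blast
    then have "t \<in> K" unfolding K_def using st(2) by simp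
    then obtain j where j: "t = kS * j" using kS_dvd by (auto elim: dvdE)
    have "z = s + of_int j *\<^sub>R (of_nat kn *\<^sub>R a)" using st(2) j kn(2) by (simp add: mult.commute)
    then show "z \<in> {s + of_int j *\<^sub>R (of_nat kn *\<^sub>R a) | s j. s \<in> int_span S}" using st(1) by blast
  qed
next
  show "{s + of_int j *\<^sub>R (of_nat kn *\<^sub>R a) | s j. s \<in> int_span S} \<subseteq> int_span RS"
  proof
    fix z assume "z \<in> {s + of_int j *\<^sub>R (of_nat kn *\<^sub>R a) | s j. s \<in> int_span S}"
    then obtain s j where sj: "s \<in> int_span S" "z = s + of_int j *\<^sub>R (of_nat kn *\<^sub>R a)" by blast
    have "s \<in> int_span RS" using sj(1) int_span_mono[OF S_RS] by blast
    moreover have "of_nat kn *\<^sub>R a \<in> int_span RS" using kS(2) kn(2) unfolding K_def by simp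
    ultimately show "z \<in> int_span RS" unfolding sj(2) by (intro int_span_add int_span_scale)
  qed
qed

lemma int_span_disj: "int_span S \<inter> int_span {of_nat kn *\<^sub>R a} = {0}"
proof
  show "{0} \<subseteq> int_span S \<inter> int_span {of_nat kn *\<^sub>R a}" by (simp add: int_span_0)
  show "int_span S \<inter> int_span {of_nat kn *\<^sub>R a} \<subseteq> {0}"
  proof
    fix x assume x: "x \<in> int_span S \<inter> int_span {of_nat kn *\<^sub>R a}"
    then have "x \<in> span S" using int_span_sub_span by blast
    then obtain e where e: "x = (\<Sum>u\<in>S. e u *\<^sub>R u)" using span_finite[OF S_fin] by auto
    have "x \<in> span {of_nat kn *\<^sub>R a}" using x int_span_sub_span by blast
    then obtain r where r: "x = r *\<^sub>R a" by (auto simp: span_singleton)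
    define d where "d u = (if u \<in> S then e u else 0)" for u
    have "(\<Sum>u\<in>P. d u *\<^sub>R u) = (\<Sum>u\<in>S. e u *\<^sub>R u)"
      unfolding d_def using S_sub P_fin by (intro sum.mono_neutral_cong_right) auto
    then have "(\<Sum>u\<in>P. d u *\<^sub>R u) + (- r) *\<^sub>R a = 0" using e r by simp
    then have "r = 0" using coord_zero[of d "- r"] by simp
    then show "x \<in> {0}" using r by simp
  qed
qed

lemma free_RS: "free_of_rank (int_span RS) (dim VS)"
  unfolding free_of_rank_def
proof (intro exI conjI)
  let ?Bs = "insert (of_nat kn *\<^sub>R a) S"
  have kaS: "of_nat kn *\<^sub>R a \<notin> S"
  proof
    assume "of_nat kn *\<^sub>R a \<in> S"
    moreover have "of_nat kn *\<^sub>R a \<in> rad B UNIV" using a_rad subspace_rad by (simp add: subspace_mul)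
    ultimately show False using S_R R_nonrad by blast
  qed
  show "finite ?Bs" using S_fin by simp
  show "card ?Bs = dim VS" using dim_VS S_fin kaS by simp
  show "?Bs \<subseteq> int_span RS"
  proof -
    have "of_nat kn *\<^sub>R a \<in> int_span RS" using kS(2) kn(2) unfolding K_def by simp
    then show ?thesis using S_RS int_span_base by blast
  qed
  show "int_span ?Bs = int_span RS"
  proof
    show "int_span ?Bs \<subseteq> int_span RS"
    proof
      fix z assume "z \<in> int_span ?Bs"
      then obtain s t where "s \<in> int_span S" "z = s + of_int t *\<^sub>R (of_nat kn *\<^sub>R a)"
        using int_span_insert_decomp by blast
      then show "z \<in> int_span RS" unfolding int_span_RS_eq by blast
    qed
    show "int_span RS \<subseteq> int_span ?Bs"
      unfolding int_span_RS_eq using int_span_insert_mem by blast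
  qed
  show "int_independent ?Bs"
  proof (rule indep_int_indep, rule independent_insertI)
    show "independent S" using independent_mono[OF indep_Sa] by blast
    show "of_nat kn *\<^sub>R a \<notin> span S"
    proof
      assume "of_nat kn *\<^sub>R a \<in> span S"
      then have "(1 / of_nat kn) *\<^sub>R (of_nat kn *\<^sub>R a) \<in> span S" by (rule span_mul)
      then have "a \<in> span S" using kn(1) by simp
      then show False using indep_Sa a_notin_S by (simp add: independent_insert)
    qed
  qed
qed

lemma ears_RS: "ears B VS RS 1"
  unfolding ears_def
  using psd_VS dim_radVS RS_nonrad span_RS free_RS copint refl_RS conn_RS
  by (auto simp: copair_def)

lemma reduced_RS: "reduced RS" using red unfolding reduced_def by auto

end


context ell
begin

lemma p_eq_rad: "p x' = p x \<Longrightarrow> x' - x \<in> rad B UNIV"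
proof -
  assume "p x' = p x"
  then have "p (x' - x) = 0" using linear_diff[OF lin_p] by simp
  then have "x' - x \<in> span {a}" using ker_p by simp
  moreover have "span {a} \<subseteq> rad B UNIV" using a_rad subspace_rad by (simp add: span_minimal)
  ultimately show ?thesis by blast
qed

lemma B_rad_eq: "x' - x \<in> rad B UNIV \<Longrightarrow> y' - y \<in> rad B UNIV \<Longrightarrow> B x' y' = B x y"
proof -
  assume h: "x' - x \<in> rad B UNIV" "y' - y \<in> rad B UNIV"
  have e1: "B (x + (x' - x)) (y + (y' - y)) = B x (y + (y' - y))" using B_rad_shift[OF h(1)] .
  have e2: "B x (y + (y' - y)) = B x y" using B_rad_shift2[OF h(2)] .
  show ?thesis using e1 e2 by simp
qed

lemma qf: "qform B p (p x) (p y) = B x y"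
proof -
  have "p (SOME x'. p x' = p x) = p x" by (rule someI) simp
  moreover have "p (SOME y'. p y' = p y) = p y" by (rule someI) simp
  ultimately show ?thesis unfolding qform_def by (intro B_rad_eq p_eq_rad)
qed

lemma refl_q: "refl (qform B p) (p \<alpha>) (p \<gamma>) = p (sr \<alpha> \<gamma>)"
  unfolding refl_def copair_def qf sr_def by (simp add: linear_diff[OF lin_p] linear_scale[OF lin_p])

end

context ellS
begin

abbreviation "W \<equiv> p ` span (S \<union> {a})"

lemma pa0: "p a = 0" using ker_p by (simp add: span_base)

lemma W_span: "W = span (p ` S)"
proof -
  have "W = span (p ` (S \<union> {a}))" by (rule span_linear_image[OF lin_p, symmetric])
  also have "p ` (S \<union> {a}) = insert 0 (p ` S)" using pa0 by auto
  finally show ?thesis by simp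
qed

lemma inj_S: "inj_on p S" using inj_on_subset[OF inj_p_P S_sub] .
lemma indep_pS: "independent (p ` S)"
  using base independent_mono S_sub unfolding is_base_def by (meson image_mono)
lemma card_pS: "card (p ` S) = card S" using card_image[OF inj_S] .
lemma dim_W: "dim W = card S"
  unfolding W_span using indep_pS card_pS by (simp add: dim_span dim_eq_card_independent)

lemma psd_W: "psd_form_on W (qform B p)"
  unfolding psd_form_on_def
proof (intro conjI ballI allI)
  show "subspace W" unfolding W_span by (rule subspace_span)
  fix x y z assume "x \<in> W" "y \<in> W"
  then obtain x' y' where xy: "x = p x'" "y = p y'" by blast
  show "qform B p x y = qform B p y x" unfolding xy qf using sym .
  show "0 \<le> qform B p x x" unfolding xy qf by (rule nonneg)
  fix c :: real
  show "qform B p (c *\<^sub>R x) y = c * qform B p x y"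
    unfolding xy linear_scale[OF lin_p, symmetric] qf by (rule scale1)
  assume "z \<in> W"
  then obtain z' where z: "z = p z'" by blast
  show "qform B p (x + y) z = qform B p x z + qform B p y z"
    unfolding xy z linear_add[OF lin_p, symmetric] qf by (rule add1)
qed

lemma rad_W: "rad (qform B p) W = {0}"
proof
  show "rad (qform B p) W \<subseteq> {0}"
  proof
    fix u assume "u \<in> rad (qform B p) W"
    then obtain x where x: "x \<in> VS" "u = p x" "B x x = 0" unfolding rad_def by (auto simp: qf)
    then have "x \<in> rad B UNIV \<inter> VS" unfolding rad_def by simp
    then have "x \<in> span {a}" using radVS by blast
    then show "u \<in> {0}" using x(2) ker_p by simp
  qed
  show "{0} \<subseteq> rad (qform B p) W"
    unfolding rad_def using linear_0[OF lin_p] qf[of 0 0] by (auto intro: span_zero image_eqI[of 0 _ 0])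
qed

lemma pRS_int: "int_span (p ` S) = int_span (p ` RS)"
proof
  show "int_span (p ` S) \<subseteq> int_span (p ` RS)" by (intro int_span_mono image_mono S_RS)
  show "int_span (p ` RS) \<subseteq> int_span (p ` S)"
  proof (rule int_span_subset, rule subsetI)
    fix w assume "w \<in> p ` RS"
    then obtain \<gamma> where g: "\<gamma> \<in> RS" "w = p \<gamma>" by blast
    obtain c t where ct: "\<gamma> = (\<Sum>u\<in>S. of_int (c u) *\<^sub>R u) + of_int t *\<^sub>R a" using rootS[OF g(1)] by blast
    have "p \<gamma> = (\<Sum>u\<in>S. of_int (c u) *\<^sub>R p u)"
      unfolding ct by (simp add: linear_add[OF lin_p] linear_sum[OF lin_p] linear_scale[OF lin_p] pa0)
    also have "\<dots> \<in> int_span (p ` S)"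
      using S_fin by (intro int_span_sum int_span_scale int_span_base) auto
    finally show "w \<in> int_span (p ` S)" using g by simp
  qed
qed

lemma ears_W: "ears (qform B p) W (p ` RS) 0"
  unfolding ears_def
proof (intro conjI ballI)
  show "psd_form_on W (qform B p)" by (rule psd_W)
  show "dim (rad (qform B p) W) = 0" unfolding rad_W by simp
  show "p ` RS \<subseteq> W - rad (qform B p) W"
  proof
    fix w assume "w \<in> p ` RS"
    then obtain \<gamma> where g: "\<gamma> \<in> RS" "w = p \<gamma>" by blast
    have "qform B p w w \<noteq> 0" unfolding g qf using Bne g by simp
    then show "w \<in> W - rad (qform B p) W" using g unfolding rad_def by auto
  qed
  show "span (p ` RS) = W" using span_linear_image[OF lin_p, of RS] span_RS by simp
  show "free_of_rank (int_span (p ` RS)) (dim W)"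
    unfolding free_of_rank_def
  proof (intro exI conjI)
    show "finite (p ` S)" using S_fin by simp
    show "card (p ` S) = dim W" using card_pS dim_W by simp
    show "p ` S \<subseteq> int_span (p ` RS)"
    proof
      fix w assume "w \<in> p ` S"
      then have "w \<in> p ` RS" using S_RS by blast
      then show "w \<in> int_span (p ` RS)" by (rule int_span_base)
    qed
    show "int_span (p ` S) = int_span (p ` RS)" by (rule pRS_int)
    show "int_independent (p ` S)" using indep_pS by (rule indep_int_indep)
  qed
  fix x y assume "x \<in> p ` RS" "y \<in> p ` RS"
  then obtain \<alpha> \<beta> where ab: "\<alpha> \<in> RS" "x = p \<alpha>" "\<beta> \<in> RS" "y = p \<beta>" by blast
  show "copair (qform B p) x y \<in> \<int>" unfolding ab copair_def qf using copint[of \<alpha> \<beta>] ab by simp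
next
  fix x assume "x \<in> p ` RS"
  then obtain \<alpha> where al: "\<alpha> \<in> RS" "x = p \<alpha>" by blast
  have "refl (qform B p) x ` p ` RS = p ` (sr \<alpha> ` RS)"
    unfolding al(2) image_image refl_q ..
  also have "sr \<alpha> ` RS = RS" using refl_RS[OF al(1)] by (simp add: refl_eq[abs_def])
  finally show "refl (qform B p) x ` p ` RS = p ` RS" .
next
  show "connected_set (qform B p) (p ` RS)"
    unfolding connected_set_def
  proof
    assume "\<exists>S''. S'' \<noteq> {} \<and> S'' \<subset> p ` RS \<and> (\<forall>x\<in>S''. \<forall>y\<in>p ` RS - S''. qform B p x y = 0)"
    then obtain S'' where S'': "S'' \<noteq> {}" "S'' \<subset> p ` RS" "\<forall>x\<in>S''. \<forall>y\<in>p ` RS - S''. qform B p x y = 0"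
      by blast
    define S' where "S' = {\<gamma> \<in> RS. p \<gamma> \<in> S''}"
    have "S' \<noteq> {}" using S''(1,2) unfolding S'_def by blast
    moreover have "S' \<subset> RS" using S''(2) unfolding S'_def by blast
    moreover have "\<forall>x\<in>S'. \<forall>y\<in>RS - S'. B x y = 0"
      using S''(3) unfolding S'_def by (auto simp: qf[symmetric])
    ultimately have ex: "\<exists>S'. S' \<noteq> {} \<and> S' \<subset> RS \<and> (\<forall>x\<in>S'. \<forall>y\<in>RS - S'. B x y = 0)" by blast
    show False using conn_RS ex unfolding connected_set_def by (rule notE)
  qed
qed

lemma base_W: "is_base W (p ` RS) (p ` S)"
  unfolding is_base_def
proof (intro conjI)
  show "p ` S \<subseteq> p ` RS" using S_RS by auto
  show "finite (p ` S)" using S_fin by simp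
  show "card (p ` S) = dim W" using card_pS dim_W by simp
  show "independent (p ` S)" by (rule indep_pS)
  show "p ` RS = p ` RS \<inter> nonneg_int_comb (p ` S) \<union> p ` RS \<inter> nonpos_int_comb (p ` S)"
  proof
    show "p ` RS \<subseteq> p ` RS \<inter> nonneg_int_comb (p ` S) \<union> p ` RS \<inter> nonpos_int_comb (p ` S)"
    proof
      fix w assume "w \<in> p ` RS"
      then obtain \<gamma> where g: "\<gamma> \<in> RS" "w = p \<gamma>" by blast
      obtain c t where ct: "\<gamma> = (\<Sum>u\<in>S. of_int (c u) *\<^sub>R u) + of_int t *\<^sub>R a"
        "(\<forall>u\<in>S. 0 \<le> c u) \<or> (\<forall>u\<in>S. c u \<le> 0)" using rootS[OF g(1)] by blast
      define c' where "c' x = c (the_inv_into S p x)" for x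
      have "p \<gamma> = (\<Sum>u\<in>S. of_int (c u) *\<^sub>R p u)"
        unfolding ct by (simp add: linear_add[OF lin_p] linear_sum[OF lin_p] linear_scale[OF lin_p] pa0)
      also have "\<dots> = (\<Sum>u\<in>S. of_int (c' (p u)) *\<^sub>R p u)"
        unfolding c'_def using the_inv_into_f_f[OF inj_S] by simp
      also have "\<dots> = (\<Sum>x\<in>p ` S. of_int (c' x) *\<^sub>R x)"
        using sum.reindex[OF inj_S, of "\<lambda>x. of_int (c' x) *\<^sub>R x"] by simp
      finally have eq: "w = (\<Sum>x\<in>p ` S. of_int (c' x) *\<^sub>R x)" using g by simp
      have "(\<forall>x\<in>p ` S. 0 \<le> c' x) \<or> (\<forall>x\<in>p ` S. c' x \<le> 0)"
        using ct(2) unfolding c'_def using the_inv_into_f_f[OF inj_S] by auto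
      then have "w \<in> nonneg_int_comb (p ` S) \<or> w \<in> nonpos_int_comb (p ` S)"
        unfolding nonneg_int_comb_def nonpos_int_comb_def using eq by blast
      then show "w \<in> p ` RS \<inter> nonneg_int_comb (p ` S) \<union> p ` RS \<inter> nonpos_int_comb (p ` S)"
        using \<open>w \<in> p ` RS\<close> by blast
    qed
  qed auto
qed

end

theorem lemma4p1:
  fixes B :: "'v::euclidean_space \<Rightarrow> 'v \<Rightarrow> real"
    and R P :: "'v set" and a :: 'v
    and p :: "'v \<Rightarrow> 'w::euclidean_space"
  assumes "ears B UNIV R 2"
    and "reduced R"
    and "quotient_map a p"
    and "fundamental_set B R P a p"
  shows "(\<forall>\<alpha>\<in>R. \<exists>k::int. k \<noteq> 0 \<and> \<alpha> + of_int k *\<^sub>R a \<in> R)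
    \<and> (\<forall>S. S \<noteq> {} \<and> S \<subset> P \<and> connected_set B S \<longrightarrow>
        ears B (span (S \<union> {a})) (R \<inter> span (S \<union> {a})) 1
        \<and> reduced (R \<inter> span (S \<union> {a}))
        \<and> ears (qform B p) (p ` span (S \<union> {a})) (p ` (R \<inter> span (S \<union> {a}))) 0
        \<and> is_base (p ` span (S \<union> {a})) (p ` (R \<inter> span (S \<union> {a}))) (p ` S)
        \<and> (\<exists>k::nat. 0 < k \<and>
             int_span (R \<inter> span (S \<union> {a})) =
               {s + of_int j *\<^sub>R (of_nat k *\<^sub>R a) | s j. s \<in> int_span S}
             \<and> int_span S \<inter> int_span {of_nat k *\<^sub>R a} = {0}))"
proof -
  interpret ell B R P a p using assms by unfold_locales
  have p1: "\<forall>\<alpha>\<in>R. \<exists>k::int. k \<noteq> 0 \<and> \<alpha> + of_int k *\<^sub>R a \<in> R" using part1 by blast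
  have p2: "ears B (span (S \<union> {a})) (R \<inter> span (S \<union> {a})) 1
        \<and> reduced (R \<inter> span (S \<union> {a}))
        \<and> ears (qform B p) (p ` span (S \<union> {a})) (p ` (R \<inter> span (S \<union> {a}))) 0
        \<and> is_base (p ` span (S \<union> {a})) (p ` (R \<inter> span (S \<union> {a}))) (p ` S)
        \<and> (\<exists>k::nat. 0 < k \<and>
             int_span (R \<inter> span (S \<union> {a})) =
               {s + of_int j *\<^sub>R (of_nat k *\<^sub>R a) | s j. s \<in> int_span S}
             \<and> int_span S \<inter> int_span {of_nat k *\<^sub>R a} = {0})"
    if h: "S \<noteq> {} \<and> S \<subset> P \<and> connected_set B S" for S
  proof -
    interpret ellS B R P a p S using h by unfold_locales auto
    show ?thesis
      using ears_RS reduced_RS ears_W base_W kn(1) int_span_RS_eq int_span_disj by blast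
  qed
  show ?thesis using p1 p2 by blast
qed

end
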